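(* Let $r,n\ge1$ and let $\mathbf f=(f_1,\dots,f_n)$ be integers with $1\le f_1\le f_2\le\cdots\le f_n\le n$. Over $\mathsf{G}_{r,n,\mathbf f}$, the tuple of (set-valued) statistics $$\bigl(\ell,\mathsf{Rmil}^0,\mathsf{Rmil}^1,\dots,\mathsf{Rmil}^{r-1},\mathsf{Lmil}^0,\dots,\mathsf{Lmil}^{r-1},\mathsf{Lmal}^0,\dots,\mathsf{Lmal}^{r-1},\mathsf{Lmap}^0,\dots,\mathsf{Lmap}^{r-1}\bigr)$$ and the tuple $$\bigl(\mathsf{sor},\mathsf{Cyc}^0,\mathsf{Cyc}^{r-1},\dots,\mathsf{Cyc}^{1},\mathsf{Lmic}^0,\mathsf{Lmic}^{r-1},\dots,\mathsf{Lmic}^1,\mathsf{Lmal}^0,\mathsf{Lmal}^{r-1},\dots,\mathsf{Lmal}^1,\mathsf{Lmap}^0,\mathsf{Lmap}^{r-1},\dots,\mathsf{Lmap}^1\bigr)$$ have the same joint distribution: for every possible value $v$, the number of $\pi\in\mathsf{G}_{r,n,\mathbf f}$ at which the first tuple equals $v$ equals the number of $\pi\in\mathsf{G}_{r,n,\mathbf f}$ at which the second tuple equals $v$.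
   Context: $\mathsf{G}_{r,n}=C_r\wr\mathfrak S_n$: pairs $(\sigma,\mathbf z)$, $\sigma\in\mathfrak S_n$, $\mathbf z\in(\mathbb Z/r)^n$, written $\pi=\sigma_1^{[z_1]}\cdots\sigma_n^{[z_n]}$ (colors in $\{0,\dots,r-1\}$, read mod $r$); product $(\sigma,\mathbf z)(\rho,\mathbf w)=(\sigma\rho,\mathbf w+\rho(\mathbf z))$ with $\rho(\mathbf z)=(z_{\rho(1)},\dots,z_{\rho(n)})$; $\pi$ acts on $\{i^{[t]}\}$ by $\pi(i^{[t]})=\sigma_i^{[z_i+t]}$, $i^{[0]}=i$. $\mathsf{G}_{r,n,\mathbf f}=\{(\sigma,\mathbf z)\in\mathsf{G}_{r,n}:\sigma(i)\le f_i\ \forall i\}$ (colored permutations on a Ferrers shape). $\ell(\pi)$: minimal number of factors in an expression of $\pi$ as a product of $s_0=1^{[1]}2\cdots n$ and $s_i$ ($1\le i<n$: base permutation $(i\ i+1)$, all colors $0$). $\mathsf{sor}(\pi)$ (sorting index): set $\pi^{(n)}=\pi$; for $j=n,\dots,1$ let $c_j$ be the position of the letter with base value $j$ in the length-$j$ word $\pi^{(j)}=\tau_1^{[y_1]}\cdots\tau_j^{[y_j]}$, $z$ its color, $e_j\in\{0,\dots,r-1\}$ with $e_j\equiv-z$; if $c_j<j$, $\pi^{(j-1)}$ is obtained by replacing the letter at position $c_j$ by $\tau_j^{[y_j-e_j]}$ and deleting the last letter; if $c_j=j$, by deleting the last letter. Then $\mathsf{sor}(\pi)=\sum_j\bigl(j-c_j+\chi(e_j>0)(2(c_j-1)+e_j)\bigr)$,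 $\chi$ the indicator. Statistics: $\mathsf{Rmil}(\pi)=\{\sigma_i^{[z_i]}:\sigma_i<\sigma_j\,\forall j>i\}$, $\mathsf{Lmil}(\pi)=\{\sigma_i^{[z_i]}:\sigma_i<\sigma_j\,\forall j<i\}$, $\mathsf{Lmal}(\pi)=\{\sigma_i^{[z_i]}:\sigma_i>\sigma_j\,\forall j<i\}$, $\mathsf{Lmap}(\pi)=\{i^{[z_i]}:\sigma_i>\sigma_j\,\forall j<i\}$; $\mathsf{Cyc}(\pi)$ = set of $\alpha^{[c]}$ over cycles of $\sigma$ with element set $B$, $\alpha=\min B$, $c\equiv\sum_{k\in B}z_k\pmod r$; $\mathsf{Lmic}(\pi)$ = set of letters of the word $\pi(1)\pi^2(1)\cdots\pi^m(1)$ ($m\ge1$ least with $\pi^m(1)=1$) whose base value is smaller than the base values of all earlier letters. For a set $S$ of colored letters, $S^t=\{k:k^{[t]}\in S\}$. *)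

theory Defs
  imports "HOL-Combinatorics.Permutations"
begin

text \<open>A colored permutation of G_{r,n} is a pair (sigma, z): sigma permutes {1..n}
 (identity outside), z i in {0..r-1} is the color of position i (z i = 0 outside {1..n}).\<close>

type_synonym cperm = "(nat \<Rightarrow> nat) \<times> (nat \<Rightarrow> nat)"

definition Grn :: "nat \<Rightarrow> nat \<Rightarrow> cperm set" where
  "Grn r n = {(\<sigma>, z). \<sigma> permutes {1..n} \<and> (\<forall>i\<in>{1..n}. z i < r)
                    \<and> (\<forall>i. i \<notin> {1..n} \<longrightarrow> z i = 0)}"

definition Grnf :: "nat \<Rightarrow> nat \<Rightarrow> (nat \<Rightarrow> nat) \<Rightarrow> cperm set" where
  "Grnf r n f = {(\<sigma>, z) \<in> Grn r n. \<forall>i\<in>{1..n}. \<sigma> i \<le> f i}"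

text \<open>Product (sigma,z)(rho,w) = (sigma rho, w + rho(z)), rho(z)_i = z_{rho(i)}.\<close>
definition cmult :: "nat \<Rightarrow> cperm \<Rightarrow> cperm \<Rightarrow> cperm" where
  "cmult r p q = (fst p \<circ> fst q, \<lambda>i. (snd q i + snd p (fst q i)) mod r)"

definition cident :: cperm where
  "cident = (id, \<lambda>_. 0)"

definition gen0 :: "nat \<Rightarrow> cperm" where
  "gen0 r = (id, \<lambda>i. if i = 1 then 1 mod r else 0)"

definition geni :: "nat \<Rightarrow> cperm" where
  "geni i = ((\<lambda>j. if j = i then i + 1 else if j = i + 1 then i else j), \<lambda>_. 0)"

definition gens :: "nat \<Rightarrow> nat \<Rightarrow> cperm set" where
  "gens r n = insert (gen0 r) (geni ` {1..<n})"

definition clength :: "nat \<Rightarrow> nat \<Rightarrow> cperm \<Rightarrow> nat" where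
  "clength r n \<pi> = (LEAST k. \<exists>ws. length ws = k \<and> set ws \<subseteq> gens r n
                              \<and> foldr (cmult r) ws cident = \<pi>)"

text \<open>Sorting index: the word pi^(j) is given by base values tau and colors y on positions 1..j.\<close>
fun sor_rec :: "nat \<Rightarrow> nat \<Rightarrow> (nat \<Rightarrow> nat) \<Rightarrow> (nat \<Rightarrow> nat) \<Rightarrow> nat" where
  "sor_rec r 0 \<tau> y = 0"
| "sor_rec r (Suc k) \<tau> y =
    (let j = Suc k;
         c = (THE p. p \<in> {1..j} \<and> \<tau> p = j);
         e = (r - y c mod r) mod r;
         \<tau>' = (if c < j then \<tau>(c := \<tau> j) else \<tau>);
         y' = (if c < j then y(c := (y j + r - e) mod r) else y)
     in (j - c) + (if e > 0 then 2 * (c - 1) + e else 0) + sor_rec r k \<tau>' y')"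

definition sor :: "nat \<Rightarrow> nat \<Rightarrow> cperm \<Rightarrow> nat" where
  "sor r n \<pi> = sor_rec r n (fst \<pi>) (snd \<pi>)"

definition Rmil :: "nat \<Rightarrow> cperm \<Rightarrow> nat \<Rightarrow> nat set" where
  "Rmil n \<pi> t = {fst \<pi> i | i. i \<in> {1..n} \<and> (\<forall>j\<in>{i<..n}. fst \<pi> i < fst \<pi> j) \<and> snd \<pi> i = t}"

definition Lmil :: "nat \<Rightarrow> cperm \<Rightarrow> nat \<Rightarrow> nat set" where
  "Lmil n \<pi> t = {fst \<pi> i | i. i \<in> {1..n} \<and> (\<forall>j\<in>{1..<i}. fst \<pi> i < fst \<pi> j) \<and> snd \<pi> i = t}"

definition Lmal :: "nat \<Rightarrow> cperm \<Rightarrow> nat \<Rightarrow> nat set" where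
  "Lmal n \<pi> t = {fst \<pi> i | i. i \<in> {1..n} \<and> (\<forall>j\<in>{1..<i}. fst \<pi> i > fst \<pi> j) \<and> snd \<pi> i = t}"

definition Lmap :: "nat \<Rightarrow> cperm \<Rightarrow> nat \<Rightarrow> nat set" where
  "Lmap n \<pi> t = {i | i. i \<in> {1..n} \<and> (\<forall>j\<in>{1..<i}. fst \<pi> i > fst \<pi> j) \<and> snd \<pi> i = t}"

definition cycle_of :: "(nat \<Rightarrow> nat) \<Rightarrow> nat \<Rightarrow> nat set" where
  "cycle_of \<sigma> i = {(\<sigma> ^^ m) i | m. True}"

definition Cyc :: "nat \<Rightarrow> nat \<Rightarrow> cperm \<Rightarrow> nat \<Rightarrow> nat set" where
  "Cyc r n \<pi> t = {Min B | B. B \<in> cycle_of (fst \<pi>) ` {1..n}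
                              \<and> (\<Sum>k\<in>B. snd \<pi> k) mod r = t}"

text \<open>Action on colored letters (i, t) = i^[t]: pi(i^[t]) = sigma_i^[z_i + t].\<close>
definition cact :: "nat \<Rightarrow> cperm \<Rightarrow> nat \<times> nat \<Rightarrow> nat \<times> nat" where
  "cact r \<pi> a = (fst \<pi> (fst a), (snd \<pi> (fst a) + snd a) mod r)"

definition Lmic :: "nat \<Rightarrow> cperm \<Rightarrow> nat \<Rightarrow> nat set" where
  "Lmic r \<pi> t =
    (let m = (LEAST m. m \<ge> 1 \<and> fst (((cact r \<pi>) ^^ m) (1, 0)) = 1);
         w = (\<lambda>k. ((cact r \<pi>) ^^ k) (1, 0))
     in {fst (w k) | k. k \<in> {1..m} \<and> (\<forall>l\<in>{1..<k}. fst (w k) < fst (w l)) \<and> snd (w k) = t})"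

definition colors_up :: "nat \<Rightarrow> nat list" where
  "colors_up r = [0..<r]"

definition colors_down :: "nat \<Rightarrow> nat list" where
  "colors_down r = map (\<lambda>t. (r - t) mod r) [0..<r]"

definition tuple1 :: "nat \<Rightarrow> nat \<Rightarrow> cperm \<Rightarrow> nat \<times> nat set list \<times> nat set list \<times> nat set list \<times> nat set list" where
  "tuple1 r n \<pi> = (clength r n \<pi>, map (Rmil n \<pi>) (colors_up r), map (Lmil n \<pi>) (colors_up r),
                   map (Lmal n \<pi>) (colors_up r), map (Lmap n \<pi>) (colors_up r))"

definition tuple2 :: "nat \<Rightarrow> nat \<Rightarrow> cperm \<Rightarrow> nat \<times> nat set list \<times> nat set list \<times> nat set list \<times> nat set list" where
  "tuple2 r n \<pi> = (sor r n \<pi>, map (Cyc r n \<pi>) (colors_down r), map (Lmic r \<pi>) (colors_down r),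
                   map (Lmal n \<pi>) (colors_down r), map (Lmap n \<pi>) (colors_down r))"

end

theory Submission
  imports Defs
begin

lemma Grn_iff: "(s, z) \<in> Grn r n \<longleftrightarrow> s permutes {1..n} \<and> (\<forall>i\<in>{1..n}. z i < r) \<and> (\<forall>i. i \<notin> {1..n} \<longrightarrow> z i = 0)"
  by (simp add: Grn_def)

lemma Grn_perm: "\<pi> \<in> Grn r n \<Longrightarrow> fst \<pi> permutes {1..n}"
  by (cases \<pi>) (simp add: Grn_def)

lemma Grn_col: "\<pi> \<in> Grn r n \<Longrightarrow> r \<ge> 1 \<Longrightarrow> snd \<pi> i < r"
  by (cases \<pi>) (auto simp add: Grn_def)

lemma Grn_col0: "\<pi> \<in> Grn r n \<Longrightarrow> i \<notin> {1..n} \<Longrightarrow> snd \<pi> i = 0"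
  by (cases \<pi>) (auto simp add: Grn_def)

lemma perm_range: "s permutes {1..n} \<Longrightarrow> i \<in> {1..n} \<Longrightarrow> s i \<in> {1..n}"
  by (meson permutes_in_image)

lemma perm_out: "s permutes {1..n} \<Longrightarrow> i \<notin> {1..n} \<Longrightarrow> s i = i"
  by (simp add: permutes_not_in)

lemma perm_inj: "s permutes S \<Longrightarrow> s x = s y \<Longrightarrow> x = y"
  by (meson permutes_inj injD)

lemma perm_inv_range: "s permutes {1..n} \<Longrightarrow> i \<in> {1..n} \<Longrightarrow> inv s i \<in> {1..n}"
  using perm_range permutes_inv by blast

definition Lterm :: "nat set \<Rightarrow> cperm \<Rightarrow> nat \<Rightarrow> nat" where
  "Lterm S \<pi> p = card {q\<in>S. p < q \<and> fst \<pi> q < fst \<pi> p}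
     + (if snd \<pi> p > 0 then 2 * card {q\<in>S. q < p \<and> fst \<pi> q < fst \<pi> p} + snd \<pi> p else 0)"

definition LS :: "nat set \<Rightarrow> cperm \<Rightarrow> nat" where
  "LS S \<pi> = (\<Sum>p\<in>S. Lterm S \<pi> p)"

definition Lf :: "nat \<Rightarrow> cperm \<Rightarrow> nat" where
  "Lf n \<pi> = LS {1..n} \<pi>"

lemma cident_Grn: "r \<ge> 1 \<Longrightarrow> cident \<in> Grn r n"
  by (simp add: cident_def Grn_def permutes_id)

lemma Lf_cident: "Lf n cident = 0"
  by (simp add: Lf_def LS_def Lterm_def cident_def)

lemma Lterm_cong: "fst \<pi> = fst \<pi>' \<Longrightarrow> snd \<pi> p = snd \<pi>' p \<Longrightarrow> Lterm S \<pi> p = Lterm S \<pi>' p"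
  by (simp add: Lterm_def)

lemma LS_color_update:
  assumes fin: "finite S" and p0: "p0 \<in> S" and s1: "s p0 = 1" and pos: "\<forall>q\<in>S. s q \<ge> 1"
  shows "LS S (s, z(p0 := v)) + z p0 = LS S (s, z) + v"
proof -
  have t: "Lterm S (s, w) p0 = w p0" for w
  proof -
    have e1: "{q\<in>S. p0 < q \<and> s q < s p0} = {}" and e2: "{q\<in>S. q < p0 \<and> s q < s p0} = {}"
      using pos s1 by auto
    show ?thesis unfolding Lterm_def fst_conv snd_conv e1 e2 by simp
  qed
  have o: "(\<Sum>p\<in>S-{p0}. Lterm S (s, z(p0 := v)) p) = (\<Sum>p\<in>S-{p0}. Lterm S (s, z) p)"
    by (rule sum.cong) (auto intro: Lterm_cong)
  have "LS S (s, z(p0 := v)) = Lterm S (s, z(p0 := v)) p0 + (\<Sum>p\<in>S-{p0}. Lterm S (s, z(p0 := v)) p)"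
    unfolding LS_def using fin p0 by (simp add: sum.remove)
  moreover have "LS S (s, z) = Lterm S (s, z) p0 + (\<Sum>p\<in>S-{p0}. Lterm S (s, z) p)"
    unfolding LS_def using fin p0 by (simp add: sum.remove)
  ultimately show ?thesis using t[of z] t[of "z(p0:=v)"] o by simp
qed

lemma transpose_less_iff: "v \<noteq> i \<Longrightarrow> v \<noteq> Suc i \<Longrightarrow> (Transposition.transpose i (Suc i) u < v) = (u < v)"
  by (auto simp add: transpose_def)

lemma card_Un_if: "finite A \<Longrightarrow> q \<notin> A \<Longrightarrow> card (A \<union> (if c then {q} else {})) = card A + (if c then 1 else 0)"
  by auto

lemma LS_swap:
  fixes S :: "nat set"
  assumes fin: "finite S" and inj: "inj_on s S" and p: "p \<in> S" and q: "q \<in> S"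
    and sp: "s p = i" and sq: "s q = Suc i"
  shows "LS S (Transposition.transpose i (Suc i) \<circ> s, z) + (if z q > 0 \<and> p < q then 2 else 0) + (if q < p then 1 else 0)
       = LS S (s, z) + (if p < q then 1 else 0) + (if z p > 0 \<and> q < p then 2 else 0)"
proof -
  define \<tau> where "\<tau> = Transposition.transpose i (Suc i)"
  have pq: "p \<noteq> q" using sp sq by auto
  have other: "Lterm S (\<tau> \<circ> s, z) x = Lterm S (s, z) x" if x: "x \<in> S - {p, q}" for x
  proof -
    have "s x \<noteq> s p" "s x \<noteq> s q" using x inj p q by (auto simp: inj_on_eq_iff)
    then have sx: "s x \<noteq> i" "s x \<noteq> Suc i" using sp sq by auto
    then have tx: "\<tau> (s x) = s x" by (simp add: \<tau>_def)
    have "\<And>y. (\<tau> (s y) < \<tau> (s x)) = (s y < s x)" using sx tx by (simp add: \<tau>_def transpose_less_iff)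
    then show ?thesis by (simp add: Lterm_def)
  qed
  define Rp where "Rp = {y\<in>S. p<y \<and> s y < i}"
  define Lp where "Lp = {y\<in>S. y<p \<and> s y < i}"
  define Rq where "Rq = {y\<in>S. q<y \<and> s y < i}"
  define Lq where "Lq = {y\<in>S. y<q \<and> s y < i}"
  have fins: "finite Rp" "finite Lp" "finite Rq" "finite Lq" using fin by (auto simp: Rp_def Lp_def Rq_def Lq_def)
  have nin: "q \<notin> Rp" "q \<notin> Lp" "p \<notin> Rq" "p \<notin> Lq" using sp sq by (auto simp: Rp_def Lp_def Rq_def Lq_def)
  have tp: "\<tau> (s p) = Suc i" and tq: "\<tau> (s q) = i" using sp sq by (simp_all add: \<tau>_def)
  have lessSuc: "(\<tau> u < Suc i) = (u < i \<or> u = Suc i)" for u by (auto simp: \<tau>_def transpose_def)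
  have lessi: "(\<tau> u < i) = (u < i)" for u by (auto simp: \<tau>_def transpose_def)
  have injS: "y \<in> S \<Longrightarrow> s y = Suc i \<longleftrightarrow> y = q" for y using inj q sq by (metis inj_on_eq_iff)
  have injS': "y \<in> S \<Longrightarrow> s y = i \<longleftrightarrow> y = p" for y using inj p sp by (metis inj_on_eq_iff)
  have e1: "{y\<in>S. p<y \<and> \<tau> (s y) < \<tau> (s p)} = Rp \<union> (if p < q then {q} else {})"
  proof -
    have "{y\<in>S. p<y \<and> s y = Suc i} = (if p < q then {q} else {})" using injS q sq by (auto split: if_splits)
    then show ?thesis unfolding tp lessSuc Rp_def by blast
  qed
  have e2: "{y\<in>S. y<p \<and> \<tau> (s y) < \<tau> (s p)} = Lp \<union> (if q < p then {q} else {})"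
  proof -
    have "{y\<in>S. y<p \<and> s y = Suc i} = (if q < p then {q} else {})" using injS q sq by (auto split: if_splits)
    then show ?thesis unfolding tp lessSuc Lp_def by blast
  qed
  have e3: "{y\<in>S. q<y \<and> s y < s q} = Rq \<union> (if q < p then {p} else {})"
  proof -
    have "{y\<in>S. q<y \<and> s y = i} = (if q < p then {p} else {})" using injS' p sp by (auto split: if_splits)
    moreover have "(u < Suc i) = (u < i \<or> u = i)" for u :: nat by arith
    ultimately show ?thesis unfolding sq Rq_def by blast
  qed
  have e4: "{y\<in>S. y<q \<and> s y < s q} = Lq \<union> (if p < q then {p} else {})"
  proof -
    have "{y\<in>S. y<q \<and> s y = i} = (if p < q then {p} else {})" using injS' p sp by (auto split: if_splits)
    moreover have "(u < Suc i) = (u < i \<or> u = i)" for u :: nat by arith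
    ultimately show ?thesis unfolding sq Lq_def by blast
  qed
  have e5: "{y\<in>S. q<y \<and> \<tau> (s y) < \<tau> (s q)} = Rq" unfolding tq lessi Rq_def by simp
  have e6: "{y\<in>S. y<q \<and> \<tau> (s y) < \<tau> (s q)} = Lq" unfolding tq lessi Lq_def by simp
  have e7: "{y\<in>S. p<y \<and> s y < s p} = Rp" unfolding sp Rp_def by simp
  have e8: "{y\<in>S. y<p \<and> s y < s p} = Lp" unfolding sp Lp_def by simp
  have T1: "Lterm S (\<tau> \<circ> s, z) p = card Rp + (if p < q then 1 else 0) + (if z p > 0 then 2 * (card Lp + (if q < p then 1 else 0)) + z p else 0)"
    unfolding Lterm_def fst_conv snd_conv o_apply e1 e2 using fins nin by (simp add: card_Un_if)
  have T2: "Lterm S (\<tau> \<circ> s, z) q = card Rq + (if z q > 0 then 2 * card Lq + z q else 0)"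
    unfolding Lterm_def fst_conv snd_conv o_apply e5 e6 by simp
  have T3: "Lterm S (s, z) q = card Rq + (if q < p then 1 else 0) + (if z q > 0 then 2 * (card Lq + (if p < q then 1 else 0)) + z q else 0)"
    unfolding Lterm_def fst_conv snd_conv e3 e4 using fins nin by (simp add: card_Un_if)
  have T4: "Lterm S (s, z) p = card Rp + (if z p > 0 then 2 * card Lp + z p else 0)"
    unfolding Lterm_def fst_conv snd_conv e7 e8 by simp
  have split: "LS S \<pi> = Lterm S \<pi> p + Lterm S \<pi> q + (\<Sum>x\<in>S-{p,q}. Lterm S \<pi> x)" for \<pi>
  proof -
    have "LS S \<pi> = Lterm S \<pi> p + (\<Sum>x\<in>S-{p}. Lterm S \<pi> x)" unfolding LS_def by (rule sum.remove[OF fin p])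
    also have "(\<Sum>x\<in>S-{p}. Lterm S \<pi> x) = Lterm S \<pi> q + (\<Sum>x\<in>S-{p}-{q}. Lterm S \<pi> x)"
      by (rule sum.remove) (use fin q pq in auto)
    also have "S-{p}-{q} = S-{p,q}" by blast
    finally show ?thesis by (simp add: add.assoc)
  qed
  have os: "(\<Sum>x\<in>S-{p,q}. Lterm S (\<tau> \<circ> s, z) x) = (\<Sum>x\<in>S-{p,q}. Lterm S (s, z) x)"
    using other by (rule sum.cong[OF refl])
  show ?thesis unfolding \<tau>_def[symmetric] split[of "(\<tau> \<circ> s, z)"] split[of "(s,z)"] os T1 T2 T3 T4
    using pq by (cases "p < q") auto
qed

lemma geni_fst: "fst (geni i) = Transposition.transpose i (Suc i)"
  by (auto simp: geni_def transpose_def fun_eq_iff)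

lemma cmult_geni: "\<pi> \<in> Grn r n \<Longrightarrow> r \<ge> 1 \<Longrightarrow> cmult r (geni i) \<pi> = (Transposition.transpose i (Suc i) \<circ> fst \<pi>, snd \<pi>)"
  using Grn_col[of \<pi> r n] by (auto simp: cmult_def geni_fst fun_eq_iff) (simp add: geni_def)

lemma cmult_gen0: "\<pi> \<in> Grn r n \<Longrightarrow> r \<ge> 1 \<Longrightarrow>
   cmult r (gen0 r) \<pi> = (fst \<pi>, (snd \<pi>)(inv (fst \<pi>) 1 := (snd \<pi> (inv (fst \<pi>) 1) + 1) mod r))"
proof -
  assume a: "\<pi> \<in> Grn r n" "r \<ge> 1"
  have p: "fst \<pi> permutes {1..n}" using a Grn_perm by blast
  have "(snd \<pi> x + snd (gen0 r) (fst \<pi> x)) mod r = ((snd \<pi>)(inv (fst \<pi>) 1 := (snd \<pi> (inv (fst \<pi>) 1) + 1) mod r)) x" for x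
  proof (cases "x = inv (fst \<pi>) 1")
    case True
    then have "fst \<pi> x = 1" using p permutes_inverses(1) by metis
    then show ?thesis using True by (simp add: gen0_def mod_add_right_eq)
  next
    case False
    then have "fst \<pi> x \<noteq> 1" using p permutes_inverses(2) by metis
    then show ?thesis using False Grn_col[OF a(1) a(2), of x] by (simp add: gen0_def)
  qed
  then show ?thesis by (simp add: cmult_def fun_eq_iff gen0_def)
qed

lemma Grn_gen_closed:
  assumes "\<pi> \<in> Grn r n" "g \<in> gens r n" "r \<ge> 1" "n \<ge> 1"
  shows "cmult r g \<pi> \<in> Grn r n"
proof -
  obtain s z where pi: "\<pi> = (s, z)" by force
  have s: "s permutes {1..n}" and zr: "\<And>i. i \<in> {1..n} \<Longrightarrow> z i < r" and z0: "\<And>i. i \<notin> {1..n} \<Longrightarrow> z i = 0"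
    using assms(1) by (auto simp: pi Grn_def)
  from assms(2) consider "g = gen0 r" | i where "i \<in> {1..<n}" "g = geni i" by (auto simp: gens_def)
  then show ?thesis
  proof cases
    case 1
    have "inv s 1 \<in> {1..n}" using perm_inv_range[OF s, of 1] assms(4) by simp
    then show ?thesis using 1 cmult_gen0[OF assms(1) assms(3)] s zr z0 assms(3) by (auto simp: pi Grn_def)
  next
    case 2
    have t: "Transposition.transpose i (Suc i) permutes {1..n}" using 2 by (intro permutes_swap_id) auto
    show ?thesis using 2 cmult_geni[OF assms(1) assms(3)] permutes_compose[OF s t] zr z0 by (auto simp: pi Grn_def)
  qed
qed

lemma LS_gen_le:
  assumes "\<pi> \<in> Grn r n" "g \<in> gens r n" "r \<ge> 1" "n \<ge> 1"
  shows "Lf n (cmult r g \<pi>) \<le> Lf n \<pi> + 1"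
proof -
  obtain s z where pi: "\<pi> = (s, z)" by force
  have s: "s permutes {1..n}" and zr: "\<And>i. z i < r"
    using assms(1) Grn_col[OF assms(1) assms(3)] by (auto simp: pi Grn_def)
  have pos: "\<forall>q\<in>{1..n}. s q \<ge> 1" using s perm_range by fastforce
  from assms(2) consider "g = gen0 r" | i where "i \<in> {1..<n}" "g = geni i" by (auto simp: gens_def)
  then show ?thesis
  proof cases
    case 1
    define p0 where "p0 = inv s 1"
    have p0: "p0 \<in> {1..n}" unfolding p0_def using perm_inv_range[OF s, of 1] assms(4) by simp
    have s1: "s p0 = 1" unfolding p0_def using s permutes_inverses(1) by metis
    have "LS {1..n} (s, z(p0 := (z p0 + 1) mod r)) + z p0 = LS {1..n} (s, z) + (z p0 + 1) mod r"
      by (rule LS_color_update[OF _ p0 s1 pos]) simp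
    moreover have "(z p0 + 1) mod r \<le> z p0 + 1" by (rule mod_less_eq_dividend)
    moreover have "Lf n (cmult r g \<pi>) = LS {1..n} (s, z(p0 := (z p0 + 1) mod r))"
      using 1 cmult_gen0[OF assms(1) assms(3)] by (simp add: pi Lf_def p0_def)
    ultimately show ?thesis unfolding pi Lf_def by linarith
  next
    case 2
    define p where "p = inv s i"
    define q where "q = inv s (Suc i)"
    have p: "p \<in> {1..n}" "s p = i" using 2 perm_inv_range[OF s, of i] permutes_inverses(1)[OF s] unfolding p_def by auto
    have q: "q \<in> {1..n}" "s q = Suc i" using 2 perm_inv_range[OF s, of "Suc i"] permutes_inverses(1)[OF s] unfolding q_def by auto
    have inj: "inj_on s {1..n}" using s by (meson permutes_inj inj_on_subset subset_UNIV)
    have "LS {1..n} (Transposition.transpose i (Suc i) \<circ> s, z) + (if z q > 0 \<and> p < q then 2 else 0) + (if q < p then 1 else 0)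
       = LS {1..n} (s, z) + (if p < q then 1 else 0) + (if z p > 0 \<and> q < p then 2 else 0)"
      by (rule LS_swap[OF _ inj p(1) q(1) p(2) q(2)]) simp
    then show ?thesis using 2 cmult_geni[OF assms(1) assms(3)] by (auto simp: pi Lf_def split: if_splits)
  qed
qed

lemma foldr_gens:
  assumes "set ws \<subseteq> gens r n" "r \<ge> 1" "n \<ge> 1"
  shows "foldr (cmult r) ws cident \<in> Grn r n \<and> Lf n (foldr (cmult r) ws cident) \<le> length ws"
  using assms(1)
proof (induction ws)
  case Nil
  then show ?case using cident_Grn[OF assms(2)] by (simp add: Lf_cident)
next
  case (Cons g ws)
  then have g: "g \<in> gens r n" and IH: "foldr (cmult r) ws cident \<in> Grn r n \<and> Lf n (foldr (cmult r) ws cident) \<le> length ws" by auto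
  show ?case using Grn_gen_closed[OF IH[THEN conjunct1] g assms(2,3)] LS_gen_le[OF IH[THEN conjunct1] g assms(2,3)] IH by simp
qed

lemma decrease_exists:
  assumes pi: "\<pi> \<in> Grn r n" and ne: "\<pi> \<noteq> cident" and r: "r \<ge> 1" and n: "n \<ge> 1"
  shows "\<exists>g\<in>gens r n. \<exists>\<pi>''\<in>Grn r n. cmult r g \<pi>'' = \<pi> \<and> Lf n \<pi>'' + 1 = Lf n \<pi>"
proof -
  obtain s z where pis: "\<pi> = (s, z)" by force
  have s: "s permutes {1..n}" and zr: "\<And>i. z i < r" and z0: "\<And>i. i \<notin> {1..n} \<Longrightarrow> z i = 0"
    using pi Grn_col[OF pi r] by (auto simp: pis Grn_def)
  have pos1: "\<forall>q\<in>{1..n}. s q \<ge> 1" using s perm_range by fastforce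
  define pos where "pos k = inv s k" for k
  have posr: "k \<in> {1..n} \<Longrightarrow> pos k \<in> {1..n}" for k unfolding pos_def using perm_inv_range[OF s] by blast
  have spos: "s (pos k) = k" for k unfolding pos_def using permutes_inverses(1)[OF s] by blast
  have posinj: "pos k = pos l \<Longrightarrow> k = l" for k l using spos by metis
  have inj: "inj_on s {1..n}" using s by (meson permutes_inj inj_on_subset subset_UNIV)
  show ?thesis
  proof (cases "z (pos 1) > 0")
    case True
    define p0 where "p0 = pos 1"
    have p0: "p0 \<in> {1..n}" using posr n p0_def by simp
    have s1: "s p0 = 1" using spos p0_def by simp
    let ?pp = "(s, z(p0 := z p0 - 1))"
    have "LS {1..n} (s, z(p0 := z p0 - 1)) + z p0 = LS {1..n} (s, z) + (z p0 - 1)"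
      by (rule LS_color_update[OF _ p0 s1 pos1]) simp
    then have L: "Lf n ?pp + 1 = Lf n \<pi>" using True p0_def by (simp add: Lf_def pis)
    have G: "?pp \<in> Grn r n" using s zr z0 p0 zr[of p0] by (auto simp: Grn_def less_imp_diff_less)
    have "cmult r (gen0 r) ?pp = (s, (z(p0 := z p0 - 1))(p0 := ((z(p0 := z p0 - 1)) p0 + 1) mod r))"
      using cmult_gen0[OF G r] p0_def pos_def by simp
    also have "\<dots> = \<pi>" using True zr[of p0] p0_def by (simp add: pis)
    finally show ?thesis using G L by (auto simp: gens_def)
  next
    case False
    then have z1: "z (pos 1) = 0" by simp
    define cond where "cond i \<longleftrightarrow> (pos i < pos (Suc i) \<and> z (pos (Suc i)) > 0) \<or> (pos (Suc i) < pos i \<and> z (pos i) = 0)" for i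
    have "\<exists>i\<in>{1..<n}. cond i"
    proof (rule ccontr)
      assume nc: "\<not> (\<exists>i\<in>{1..<n}. cond i)"
      have zpos: "k \<ge> 1 \<Longrightarrow> k \<le> n \<Longrightarrow> z (pos k) = 0" for k
      proof (induction k)
        case 0 then show ?case by simp
      next
        case (Suc k)
        show ?case
        proof (cases "k = 0")
          case True then show ?thesis using z1 by simp
        next
          case False
          then have zk: "z (pos k) = 0" using Suc by simp
          have "\<not> cond k" using nc Suc False by auto
          moreover have "pos k \<noteq> pos (Suc k)" using posinj by fastforce
          ultimately show ?thesis using zk unfolding cond_def by auto
        qed
      qed
      have incr: "k \<ge> 1 \<Longrightarrow> k < n \<Longrightarrow> pos k < pos (Suc k)" for k
      proof -
        assume k: "k \<ge> 1" "k < n"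
        have "\<not> cond k" using nc k by auto
        moreover have "pos k \<noteq> pos (Suc k)" using posinj by fastforce
        ultimately show ?thesis using zpos[of k] k unfolding cond_def by auto
      qed
      have ge: "k \<ge> 1 \<Longrightarrow> k \<le> n \<Longrightarrow> pos k \<ge> k" for k
      proof (induction k)
        case 0 then show ?case by simp
      next
        case (Suc k)
        show ?case
        proof (cases "k = 0")
          case True then show ?thesis using posr[of 1] n by simp
        next
          case False then show ?thesis using Suc incr[of k] by simp
        qed
      qed
      have le: "d < n \<Longrightarrow> pos (n - d) \<le> n - d" for d
      proof (induction d)
        case 0 then show ?case using posr[of n] n by simp
      next
        case (Suc d)
        have "pos (n - Suc d) < pos (Suc (n - Suc d))" using incr[of "n - Suc d"] Suc by simp
        moreover have "Suc (n - Suc d) = n - d" using Suc by simp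
        ultimately show ?case using Suc by simp
      qed
      have posid: "k \<in> {1..n} \<Longrightarrow> pos k = k" for k
        using ge[of k] le[of "n - k"] by simp
      have "s = id"
      proof
        fix k show "s k = id k"
        proof (cases "k \<in> {1..n}")
          case True then show ?thesis using spos[of k] posid by simp
        next
          case False then show ?thesis using perm_out[OF s] by simp
        qed
      qed
      moreover have "z = (\<lambda>_. 0)"
      proof
        fix k show "z k = 0"
        proof (cases "k \<in> {1..n}")
          case True then show ?thesis using zpos[of k] posid[of k] by simp
        next
          case False then show ?thesis using z0 by simp
        qed
      qed
      ultimately show False using ne by (simp add: pis cident_def)
    qed
    then obtain i where i: "i \<in> {1..<n}" "cond i" by blast
    define p where "p = pos i"
    define q where "q = pos (Suc i)"
    have p: "p \<in> {1..n}" "s p = i" using posr[of i] spos i p_def by auto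
    have q: "q \<in> {1..n}" "s q = Suc i" using posr[of "Suc i"] spos i q_def by auto
    define t where "t = Transposition.transpose i (Suc i)"
    let ?pp = "(t \<circ> s, z)"
    have eq: "LS {1..n} (t \<circ> s, z) + (if z q > 0 \<and> p < q then 2 else 0) + (if q < p then 1 else 0)
       = LS {1..n} (s, z) + (if p < q then 1 else 0) + (if z p > 0 \<and> q < p then 2 else 0)"
      unfolding t_def by (rule LS_swap[OF _ inj p(1) q(1) p(2) q(2)]) simp
    have L: "Lf n ?pp + 1 = Lf n \<pi>" using eq i(2) unfolding cond_def p_def[symmetric] q_def[symmetric]
      by (auto simp: Lf_def pis split: if_splits)
    have tp: "t permutes {1..n}" unfolding t_def using i by (intro permutes_swap_id) auto
    have G: "?pp \<in> Grn r n" using s zr z0 permutes_compose[OF s tp] by (auto simp: Grn_def)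
    have "cmult r (geni i) ?pp = (t \<circ> (t \<circ> s), z)" using cmult_geni[OF G r] t_def by simp
    also have "\<dots> = \<pi>" by (simp add: pis t_def fun_eq_iff)
    finally show ?thesis using G L i by (auto simp: gens_def)
  qed
qed

lemma exists_word:
  assumes "r \<ge> 1" "n \<ge> 1"
  shows "\<pi> \<in> Grn r n \<Longrightarrow> \<exists>ws. length ws = Lf n \<pi> \<and> set ws \<subseteq> gens r n \<and> foldr (cmult r) ws cident = \<pi>"
proof (induction "Lf n \<pi>" arbitrary: \<pi> rule: less_induct)
  case less
  show ?case
  proof (cases "\<pi> = cident")
    case True then show ?thesis by (intro exI[of _ "[]"]) (simp add: Lf_cident)
  next
    case False
    then obtain g \<pi>'' where g: "g \<in> gens r n" "\<pi>'' \<in> Grn r n" "cmult r g \<pi>'' = \<pi>" "Lf n \<pi>'' + 1 = Lf n \<pi>"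
      using decrease_exists[OF less.prems _ assms] by blast
    then obtain ws where "length ws = Lf n \<pi>''" "set ws \<subseteq> gens r n" "foldr (cmult r) ws cident = \<pi>''"
      using less.hyps[of \<pi>''] by auto
    then show ?thesis using g by (intro exI[of _ "g # ws"]) auto
  qed
qed

theorem clength_Lf:
  assumes "\<pi> \<in> Grn r n" "r \<ge> 1" "n \<ge> 1"
  shows "clength r n \<pi> = Lf n \<pi>"
  unfolding clength_def
proof (rule Least_equality)
  show "\<exists>ws. length ws = Lf n \<pi> \<and> set ws \<subseteq> gens r n \<and> foldr (cmult r) ws cident = \<pi>"
    using exists_word assms by blast
next
  fix k assume "\<exists>ws. length ws = k \<and> set ws \<subseteq> gens r n \<and> foldr (cmult r) ws cident = \<pi>"
  then show "Lf n \<pi> \<le> k" using foldr_gens assms(2,3) by blast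
qed

definition rho :: "nat \<Rightarrow> nat \<Rightarrow> nat \<Rightarrow> nat" where
  "rho n c p = (if p < c then p else if p = c then n else if p \<le> n then p - 1 else p)"

definition rhoi :: "nat \<Rightarrow> nat \<Rightarrow> nat \<Rightarrow> nat" where
  "rhoi n c p = (if p < c then p else if p < n then p + 1 else if p = n then c else p)"

lemma rho_rhoi: "c \<in> {1..n} \<Longrightarrow> rho n c (rhoi n c p) = p"
  by (auto simp: rho_def rhoi_def)

lemma rhoi_rho: "c \<in> {1..n} \<Longrightarrow> rhoi n c (rho n c p) = p"
  by (auto simp: rho_def rhoi_def)

lemma bij_permutes:
  assumes "\<And>x. f (g x) = x" "\<And>x. g (f x) = x" "\<And>x. x \<notin> S \<Longrightarrow> f x = x"
  shows "f permutes S"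
  unfolding permutes_def using assms by metis

lemma rho_permutes: "c \<in> {1..n} \<Longrightarrow> rho n c permutes {1..n}"
  by (rule bij_permutes[of _ "rhoi n c"]) (auto simp: rho_rhoi rhoi_rho, auto simp: rho_def)

lemma rhoi_permutes: "c \<in> {1..n} \<Longrightarrow> rhoi n c permutes {1..n}"
  by (rule bij_permutes[of _ "rho n c"]) (auto simp: rho_rhoi rhoi_rho, auto simp: rhoi_def)

definition ins_l :: "nat \<Rightarrow> cperm \<Rightarrow> nat \<Rightarrow> nat \<Rightarrow> cperm" where
  "ins_l n \<pi> c e = (fst \<pi> \<circ> rho n c, (snd \<pi> \<circ> rho n c)(c := e))"

definition del_l :: "nat \<Rightarrow> cperm \<Rightarrow> cperm \<times> nat \<times> nat" where
  "del_l n \<pi> = (let c = inv (fst \<pi>) n in ((fst \<pi> \<circ> rhoi n c, (snd \<pi>)(c := 0) \<circ> rhoi n c), c, snd \<pi> c))"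

definition ins_s :: "nat \<Rightarrow> nat \<Rightarrow> cperm \<Rightarrow> nat \<Rightarrow> nat \<Rightarrow> cperm" where
  "ins_s r n \<pi> c e = (fst \<pi> \<circ> Transposition.transpose c n,
     if c = n then (snd \<pi>)(n := (r - e) mod r) else (snd \<pi>)(c := (r - e) mod r, n := (snd \<pi> c + e) mod r))"

definition del_s :: "nat \<Rightarrow> nat \<Rightarrow> cperm \<Rightarrow> cperm \<times> nat \<times> nat" where
  "del_s r n \<pi> = (let c = inv (fst \<pi>) n; e = (r - snd \<pi> c) mod r in
     ((fst \<pi> \<circ> Transposition.transpose c n,
       if c = n then (snd \<pi>)(n := 0) else (snd \<pi>)(c := (snd \<pi> n + r - e) mod r, n := 0)), c, e))"

definition Dom :: "nat \<Rightarrow> nat \<Rightarrow> (nat \<Rightarrow> nat) \<Rightarrow> (cperm \<times> nat \<times> nat) set" where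
  "Dom r n f = Grnf r (n - 1) f \<times> ({c\<in>{1..n}. n \<le> f c} \<times> {..<r})"

lemma Grnf_iff: "(s, z) \<in> Grnf r n f \<longleftrightarrow> (s, z) \<in> Grn r n \<and> (\<forall>i\<in>{1..n}. s i \<le> f i)"
  by (simp add: Grnf_def)

lemma perm_shrink: "s permutes {1..n::nat} \<Longrightarrow> s n = n \<Longrightarrow> s permutes {1..n - 1}"
proof (rule permutes_superset)
  fix x assume "s permutes {1..n}" "s n = n" "x \<in> {1..n} - {1..n-1}"
  then show "s x = x" by (cases "x = n") auto
qed

lemma nout: "(n::nat) \<notin> {1..n - 1}" by auto

lemma perm_grow: "s permutes {1..n - 1::nat} \<Longrightarrow> s permutes {1..n}"
  by (erule permutes_subset) auto

lemma perm_n: "s permutes {1..n - 1::nat} \<Longrightarrow> s n = n"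
  using perm_out nout by blast

lemma ins_l_mem:
  assumes r: "r \<ge> 1" and n: "n \<ge> 1" and mono: "\<forall>i\<in>{1..n}. \<forall>j\<in>{1..n}. i \<le> j \<longrightarrow> f i \<le> f j"
    and x: "(\<pi>, c, e) \<in> Dom r n f"
  shows "ins_l n \<pi> c e \<in> Grnf r n f"
proof -
  obtain s z where pi: "\<pi> = (s, z)" by force
  have s: "s permutes {1..n-1}" and zr: "\<And>i. z i < r" and z0: "\<And>i. i \<notin> {1..n-1} \<Longrightarrow> z i = 0"
    and sf: "\<And>i. i \<in> {1..n-1} \<Longrightarrow> s i \<le> f i" and c: "c \<in> {1..n}" "n \<le> f c" and e: "e < r"
    using x Grn_col[of \<pi> r "n-1"] r by (auto simp: Dom_def Grnf_def Grn_def pi)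
  have sn: "s n = n" using perm_n[OF s] .
  have P: "s \<circ> rho n c permutes {1..n}" using permutes_compose[OF rho_permutes[OF c(1)] perm_grow[OF s]] .
  have B: "(s \<circ> rho n c) i \<le> f i" if i: "i \<in> {1..n}" for i
  proof -
    consider "i < c" | "i = c" | "c < i" by linarith
    then show ?thesis
    proof cases
      case 1 then show ?thesis using i c sf[of i] by (auto simp: rho_def)
    next
      case 2 then show ?thesis using c sn by (simp add: rho_def)
    next
      case 3
      then have "i - 1 \<in> {1..n-1}" using i c by auto
      then have "s (i - 1) \<le> f (i - 1)" using sf by blast
      moreover have "f (i - 1) \<le> f i" using mono i 3 c \<open>i - 1 \<in> {1..n-1}\<close> by auto
      ultimately show ?thesis using 3 i by (simp add: rho_def)
    qed
  qed
  have Z: "\<forall>i. i \<notin> {1..n} \<longrightarrow> ((z \<circ> rho n c)(c := e)) i = 0"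
    using c z0 by (auto simp: rho_def)
  show ?thesis using P B Z zr e by (auto simp: ins_l_def pi Grnf_def Grn_def)
qed

lemma perm_inv_eq: "s permutes S \<Longrightarrow> s c = y \<Longrightarrow> inv s y = c"
  using permutes_inverses(2) by metis

lemma del_l_mem:
  assumes r: "r \<ge> 1" and n: "n \<ge> 1" and mono: "\<forall>i\<in>{1..n}. \<forall>j\<in>{1..n}. i \<le> j \<longrightarrow> f i \<le> f j"
    and x: "\<pi> \<in> Grnf r n f"
  shows "del_l n \<pi> \<in> Dom r n f"
proof -
  obtain s z where pi: "\<pi> = (s, z)" by force
  have s: "s permutes {1..n}" and zr: "\<And>i. z i < r" and z0: "\<And>i. i \<notin> {1..n} \<Longrightarrow> z i = 0"
    and sf: "\<And>i. i \<in> {1..n} \<Longrightarrow> s i \<le> f i"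
    using x Grn_col[of \<pi> r "n"] r by (auto simp: Grnf_def Grn_def pi)
  define c where "c = inv s n"
  have c: "c \<in> {1..n}" "s c = n" using perm_inv_range[OF s, of n] permutes_inverses(1)[OF s] n c_def by auto
  have fc: "n \<le> f c" using sf[OF c(1)] c by simp
  have P: "s \<circ> rhoi n c permutes {1..n}" using permutes_compose[OF rhoi_permutes[OF c(1)] s] .
  have P': "s \<circ> rhoi n c permutes {1..n-1}" by (rule perm_shrink[OF P]) (use c in \<open>simp add: rhoi_def\<close>)
  have B: "(s \<circ> rhoi n c) i \<le> f i" if i: "i \<in> {1..n-1}" for i
  proof (cases "i < c")
    case True then show ?thesis using i sf[of i] by (auto simp: rhoi_def)
  next
    case False
    have "(s \<circ> rhoi n c) i \<in> {1..n}" using perm_range[OF P, of i] i by auto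
    moreover have "f c \<le> f i" using mono False i c by auto
    ultimately show ?thesis using fc by auto
  qed
  have Z: "\<forall>i. i \<notin> {1..n-1} \<longrightarrow> (z(c := 0) \<circ> rhoi n c) i = 0"
    using c z0 by (auto simp: rhoi_def)
  show ?thesis using P' B Z zr c fc r by (auto simp: del_l_def pi Dom_def Grnf_def Grn_def c_def Let_def)
qed

lemma del_ins_l:
  assumes r: "r \<ge> 1" and x: "(\<pi>, c, e) \<in> Dom r n f"
  shows "del_l n (ins_l n \<pi> c e) = (\<pi>, c, e)"
proof -
  obtain s z where pi: "\<pi> = (s, z)" by force
  have s: "s permutes {1..n-1}" and z0: "\<And>i. i \<notin> {1..n-1} \<Longrightarrow> z i = 0" and c: "c \<in> {1..n}"
    using x by (auto simp: Dom_def Grnf_def Grn_def pi)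
  have P: "s \<circ> rho n c permutes {1..n}" using permutes_compose[OF rho_permutes[OF c] perm_grow[OF s]] .
  have "(s \<circ> rho n c) c = n" using perm_n[OF s] by (simp add: rho_def)
  then have ic: "inv (s \<circ> rho n c) n = c" using perm_inv_eq[OF P] by blast
  have 1: "s \<circ> rho n c \<circ> rhoi n c = s" using rho_rhoi[OF c] by (simp add: fun_eq_iff)
  have 2: "((z \<circ> rho n c)(c := e))(c := 0) \<circ> rhoi n c = z"
  proof
    fix p show "(((z \<circ> rho n c)(c := e))(c := 0) \<circ> rhoi n c) p = z p"
      using rho_rhoi[OF c, of p] z0[OF nout] c by (auto simp: rhoi_def)
  qed
  show ?thesis using 1 2 by (simp add: del_l_def ins_l_def pi ic Let_def)
qed

lemma ins_del_l:
  assumes x: "\<pi> \<in> Grnf r n f" and n: "n \<ge> 1"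
  shows "(case del_l n \<pi> of (\<pi>', c, e) \<Rightarrow> ins_l n \<pi>' c e) = \<pi>"
proof -
  obtain s z where pi: "\<pi> = (s, z)" by force
  have s: "s permutes {1..n}" using x by (auto simp: Grnf_def Grn_def pi)
  define c where "c = inv s n"
  have c: "c \<in> {1..n}" using perm_inv_range[OF s, of n] n c_def by auto
  have 1: "s \<circ> rhoi n c \<circ> rho n c = s" using rhoi_rho[OF c] by (simp add: fun_eq_iff)
  have 2: "(z(c := 0) \<circ> rhoi n c \<circ> rho n c)(c := z c) = z" using rhoi_rho[OF c] by (simp add: fun_eq_iff)
  show ?thesis using 1 2 by (simp add: del_l_def ins_l_def pi c_def[symmetric] Let_def)
qed

lemma bij_ins_l:
  assumes r: "r \<ge> 1" and n: "n \<ge> 1" and mono: "\<forall>i\<in>{1..n}. \<forall>j\<in>{1..n}. i \<le> j \<longrightarrow> f i \<le> f j"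
  shows "bij_betw (\<lambda>(\<pi>, c, e). ins_l n \<pi> c e) (Dom r n f) (Grnf r n f)"
proof (rule bij_betwI[where g = "del_l n"])
  show "(\<lambda>(\<pi>, c, e). ins_l n \<pi> c e) \<in> Dom r n f \<rightarrow> Grnf r n f" using ins_l_mem[OF r n mono] by auto
  show "del_l n \<in> Grnf r n f \<rightarrow> Dom r n f" using del_l_mem[OF r n mono] by auto
  show "del_l n (case x of (\<pi>, c, e) \<Rightarrow> ins_l n \<pi> c e) = x" if "x \<in> Dom r n f" for x
    using del_ins_l[OF r] that by (cases x) auto
  show "(case del_l n y of (\<pi>, c, e) \<Rightarrow> ins_l n \<pi> c e) = y" if "y \<in> Grnf r n f" for y
    using ins_del_l[OF that n] by simp
qed

lemma mod_neg_neg: "(a::nat) < r \<Longrightarrow> (r - (r - a) mod r) mod r = a"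
  by (cases "a = 0") auto

lemma mod_sub_add: "(e::nat) \<le> r \<Longrightarrow> ((x + r - e) mod r + e) mod r = x mod r"
proof -
  assume e: "e \<le> r"
  have "((x + r - e) mod r + e) mod r = (x + r - e + e) mod r" by (simp add: mod_add_left_eq)
  also have "x + r - e + e = x + r" using e by simp
  finally show ?thesis by simp
qed

lemma ins_s_mem:
  assumes r: "r \<ge> 1" and n: "n \<ge> 1" and mono: "\<forall>i\<in>{1..n}. \<forall>j\<in>{1..n}. i \<le> j \<longrightarrow> f i \<le> f j"
    and x: "(\<pi>, c, e) \<in> Dom r n f"
  shows "ins_s r n \<pi> c e \<in> Grnf r n f"
proof -
  obtain s z where pi: "\<pi> = (s, z)" by force
  have s: "s permutes {1..n-1}" and zr: "\<And>i. z i < r" and z0: "\<And>i. i \<notin> {1..n-1} \<Longrightarrow> z i = 0"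
    and sf: "\<And>i. i \<in> {1..n-1} \<Longrightarrow> s i \<le> f i" and c: "c \<in> {1..n}" "n \<le> f c" and e: "e < r"
    using x Grn_col[of \<pi> r "n-1"] r by (auto simp: Dom_def Grnf_def Grn_def pi)
  have sn: "s n = n" using perm_n[OF s] .
  have t: "Transposition.transpose c n permutes {1..n}" using c n by (intro permutes_swap_id) auto
  have P: "s \<circ> Transposition.transpose c n permutes {1..n}" using permutes_compose[OF t perm_grow[OF s]] .
  have B: "(s \<circ> Transposition.transpose c n) i \<le> f i" if i: "i \<in> {1..n}" for i
  proof -
    consider "i = c" | "i \<noteq> c" "i = n" | "i \<noteq> c" "i \<noteq> n" by blast
    then show ?thesis
    proof cases
      case 1 then show ?thesis using c sn by simp
    next
      case 2
      then have "c \<in> {1..n-1}" using c by auto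
      then have "s c \<le> f c" using sf by blast
      moreover have "f c \<le> f n" using mono c n by auto
      ultimately show ?thesis using 2 by simp
    next
      case 3
      then have "i \<in> {1..n-1}" using i by auto
      then show ?thesis using 3 sf by simp
    qed
  qed
  have Z: "\<forall>i. i \<notin> {1..n} \<longrightarrow> (if c = n then z(n := (r - e) mod r) else z(c := (r - e) mod r, n := (z c + e) mod r)) i = 0"
    using c z0 by auto
  have Zr: "\<forall>i. (if c = n then z(n := (r - e) mod r) else z(c := (r - e) mod r, n := (z c + e) mod r)) i < r"
    using zr r by auto
  show ?thesis unfolding ins_s_def pi fst_conv snd_conv Grnf_iff Grn_iff using P B Z Zr by blast
qed

lemma del_s_mem:
  assumes r: "r \<ge> 1" and n: "n \<ge> 1" and mono: "\<forall>i\<in>{1..n}. \<forall>j\<in>{1..n}. i \<le> j \<longrightarrow> f i \<le> f j"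
    and x: "\<pi> \<in> Grnf r n f"
  shows "del_s r n \<pi> \<in> Dom r n f"
proof -
  obtain s z where pi: "\<pi> = (s, z)" by force
  have s: "s permutes {1..n}" and zr: "\<And>i. z i < r" and z0: "\<And>i. i \<notin> {1..n} \<Longrightarrow> z i = 0"
    and sf: "\<And>i. i \<in> {1..n} \<Longrightarrow> s i \<le> f i"
    using x Grn_col[of \<pi> r "n"] r by (auto simp: Grnf_def Grn_def pi)
  define c where "c = inv s n"
  have c: "c \<in> {1..n}" "s c = n" using perm_inv_range[OF s, of n] permutes_inverses(1)[OF s] n c_def by auto
  have fc: "n \<le> f c" using sf[OF c(1)] c by simp
  have t: "Transposition.transpose c n permutes {1..n}" using c n by (intro permutes_swap_id) auto
  have P: "s \<circ> Transposition.transpose c n permutes {1..n}" using permutes_compose[OF t s] .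
  have P': "s \<circ> Transposition.transpose c n permutes {1..n-1}" by (rule perm_shrink[OF P]) (use c in simp)
  have B: "(s \<circ> Transposition.transpose c n) i \<le> f i" if i: "i \<in> {1..n-1}" for i
  proof (cases "i = c")
    case False
    then have "i \<noteq> n" using i by auto
    then show ?thesis using False i sf[of i] by auto
  next
    case True
    have "s n \<in> {1..n}" using perm_range[OF s, of n] n by auto
    then show ?thesis using True fc by auto
  qed
  define e where "e = (r - z c) mod r"
  have Z: "\<forall>i. i \<notin> {1..n-1} \<longrightarrow> (if c = n then z(n := 0) else z(c := (z n + r - e) mod r, n := 0)) i = 0"
    using c z0 by auto
  have Zr: "\<forall>i. (if c = n then z(n := 0) else z(c := (z n + r - e) mod r, n := 0)) i < r"
    using zr r by auto
  have er: "e < r" using r e_def by simp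
  have eq: "del_s r n \<pi> = ((s \<circ> Transposition.transpose c n, if c = n then z(n := 0) else z(c := (z n + r - e) mod r, n := 0)), c, e)"
    by (simp add: del_s_def pi c_def e_def Let_def)
  have G: "(s \<circ> Transposition.transpose c n, if c = n then z(n := 0) else z(c := (z n + r - e) mod r, n := 0)) \<in> Grnf r (n-1) f"
    unfolding Grnf_iff Grn_iff using P' B Z Zr by blast
  show ?thesis unfolding eq Dom_def using G c fc er by blast
qed

lemma del_ins_s:
  assumes r: "r \<ge> 1" and x: "(\<pi>, c, e) \<in> Dom r n f"
  shows "del_s r n (ins_s r n \<pi> c e) = (\<pi>, c, e)"
proof -
  obtain s z where pi: "\<pi> = (s, z)" by force
  have s: "s permutes {1..n-1}" and z0: "\<And>i. i \<notin> {1..n-1} \<Longrightarrow> z i = 0" and c: "c \<in> {1..n}"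
    and e: "e < r" and zr: "\<And>i. z i < r"
    using x Grn_col[of \<pi> r "n-1"] r by (auto simp: Dom_def Grnf_def Grn_def pi)
  have t: "Transposition.transpose c n permutes {1..n}" using c by (intro permutes_swap_id) auto
  have P: "s \<circ> Transposition.transpose c n permutes {1..n}" using permutes_compose[OF t perm_grow[OF s]] .
  have "(s \<circ> Transposition.transpose c n) c = n" using perm_n[OF s] by simp
  then have ic: "inv (s \<circ> Transposition.transpose c n) n = c" using perm_inv_eq[OF P] by blast
  have 1: "s \<circ> Transposition.transpose c n \<circ> Transposition.transpose c n = s" by (simp add: fun_eq_iff)
  have zn: "z n = 0" using z0[OF nout] .
  define zz where "zz = (if c = n then z(n := (r - e) mod r) else z(c := (r - e) mod r, n := (z c + e) mod r))"
  have zzc: "zz c = (r - e) mod r" by (simp add: zz_def)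
  have ee: "(r - zz c) mod r = e" using zzc mod_neg_neg[OF e] by simp
  have 2: "(if c = n then zz(n := 0) else zz(c := (zz n + r - e) mod r, n := 0)) = z"
  proof (cases "c = n")
    case True then show ?thesis using zn by (simp add: zz_def fun_eq_iff)
  next
    case False
    have "((z c + e) mod r + r - e) mod r = z c"
    proof -
      have "((z c + e) mod r + r - e) mod r = ((z c + e) mod r + (r - e)) mod r" using e by simp
      also have "\<dots> = (z c + e + (r - e)) mod r" by (simp add: mod_add_left_eq)
      also have "z c + e + (r - e) = z c + r" using e by simp
      finally show ?thesis using zr[of c] by simp
    qed
    then show ?thesis using False zn by (simp add: zz_def fun_eq_iff)
  qed
  have fs: "fst (ins_s r n \<pi> c e) = s \<circ> Transposition.transpose c n" by (simp add: ins_s_def pi)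
  have sn: "snd (ins_s r n \<pi> c e) = zz" by (simp add: ins_s_def pi zz_def)
  have "del_s r n (ins_s r n \<pi> c e) = ((s \<circ> Transposition.transpose c n \<circ> Transposition.transpose c n, if c = n then zz(n := 0) else zz(c := (zz n + r - e) mod r, n := 0)), c, e)"
    unfolding del_s_def Let_def fs sn ic ee ..
  then show ?thesis unfolding 1 2 pi .
qed

lemma ins_del_s:
  assumes x: "\<pi> \<in> Grnf r n f" and n: "n \<ge> 1" and r: "r \<ge> 1"
  shows "(case del_s r n \<pi> of (\<pi>', c, e) \<Rightarrow> ins_s r n \<pi>' c e) = \<pi>"
proof -
  obtain s z where pi: "\<pi> = (s, z)" by force
  have s: "s permutes {1..n}" and zr: "\<And>i. z i < r" using x Grn_col[of \<pi> r n] r by (auto simp: Grnf_def Grn_def pi)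
  define c where "c = inv s n"
  define e where "e = (r - z c) mod r"
  have e: "e \<le> r" using e_def r by simp
  have 1: "s \<circ> Transposition.transpose c n \<circ> Transposition.transpose c n = s" by (simp add: fun_eq_iff)
  have ce: "(r - e) mod r = z c" unfolding e_def using mod_neg_neg[OF zr[of c]] .
  have 2: "(if c = n then (z(n := 0))(n := (r - e) mod r)
            else (z(c := (z n + r - e) mod r, n := 0))(c := (r - e) mod r, n := ((z(c := (z n + r - e) mod r, n := 0)) c + e) mod r)) = z"
  proof (cases "c = n")
    case True then show ?thesis using ce by (simp add: fun_eq_iff)
  next
    case False
    then have "((z(c := (z n + r - e) mod r, n := 0)) c + e) mod r = z n"
      using mod_sub_add[OF e, of "z n"] zr[of n] by simp
    then show ?thesis using False ce by (simp add: fun_eq_iff)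
  qed
  have eq: "del_s r n \<pi> = ((s \<circ> Transposition.transpose c n, if c = n then z(n := 0) else z(c := (z n + r - e) mod r, n := 0)), c, e)"
    by (simp add: del_s_def pi c_def e_def Let_def)
  have "(case del_s r n \<pi> of (\<pi>', c, e) \<Rightarrow> ins_s r n \<pi>' c e) = (s \<circ> Transposition.transpose c n \<circ> Transposition.transpose c n, if c = n then (z(n := 0))(n := (r - e) mod r)
            else (z(c := (z n + r - e) mod r, n := 0))(c := (r - e) mod r, n := ((z(c := (z n + r - e) mod r, n := 0)) c + e) mod r))"
    unfolding eq by (simp add: ins_s_def)
  then show ?thesis unfolding 1 2 pi .
qed

lemma bij_ins_s:
  assumes r: "r \<ge> 1" and n: "n \<ge> 1" and mono: "\<forall>i\<in>{1..n}. \<forall>j\<in>{1..n}. i \<le> j \<longrightarrow> f i \<le> f j"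
  shows "bij_betw (\<lambda>(\<pi>, c, e). ins_s r n \<pi> c e) (Dom r n f) (Grnf r n f)"
proof (rule bij_betwI[where g = "del_s r n"])
  show "(\<lambda>(\<pi>, c, e). ins_s r n \<pi> c e) \<in> Dom r n f \<rightarrow> Grnf r n f" using ins_s_mem[OF r n mono] by auto
  show "del_s r n \<in> Grnf r n f \<rightarrow> Dom r n f" using del_s_mem[OF r n mono] by auto
  show "del_s r n (case x of (\<pi>, c, e) \<Rightarrow> ins_s r n \<pi> c e) = x" if "x \<in> Dom r n f" for x
    using del_ins_s[OF r] that by (cases x) auto
  show "(case del_s r n y of (\<pi>, c, e) \<Rightarrow> ins_s r n \<pi> c e) = y" if "y \<in> Grnf r n f" for y
    using ins_del_s[OF that n r] by simp
qed

lemma rho_image: "c \<in> {1..n} \<Longrightarrow> rho n c ` ({1..n} - {c}) = {1..n-1}"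
proof
  assume c: "c \<in> {1..n}"
  show "rho n c ` ({1..n} - {c}) \<subseteq> {1..n-1}" using c by (auto simp: rho_def)
  show "{1..n-1} \<subseteq> rho n c ` ({1..n} - {c})"
  proof
    fix y assume y: "y \<in> {1..n-1}"
    have "rhoi n c y \<in> {1..n} - {c}" using y c by (auto simp: rhoi_def)
    moreover have "rho n c (rhoi n c y) = y" using rho_rhoi[OF c] .
    ultimately show "y \<in> rho n c ` ({1..n} - {c})" by (metis image_eqI)
  qed
qed

lemma rho_inj: "c \<in> {1..n} \<Longrightarrow> inj_on (rho n c) A"
  by (metis inj_on_inverseI rhoi_rho)

lemma rho_bij: "c \<in> {1..n} \<Longrightarrow> bij_betw (rho n c) ({1..n} - {c}) {1..n-1}"
  using rho_image rho_inj by (simp add: bij_betw_def)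

lemma rho_mono: "c \<in> {1..n} \<Longrightarrow> x \<in> {1..n} - {c} \<Longrightarrow> y \<in> {1..n} - {c} \<Longrightarrow> (x < y) = (rho n c x < rho n c y)"
  by (auto simp: rho_def)

lemma Lterm_transfer:
  assumes bij: "bij_betw h A B" and mono: "\<forall>x\<in>A. \<forall>y\<in>A. (x < y) = (h x < h y)"
    and eq: "\<forall>x\<in>A. fst \<pi> x = fst \<pi>' (h x) \<and> snd \<pi> x = snd \<pi>' (h x)" and x: "x \<in> A"
  shows "Lterm A \<pi> x = Lterm B \<pi>' (h x)"
proof -
  have img: "h ` A = B" and inj: "inj_on h A" using bij by (auto simp: bij_betw_def)
  have s1: "{q\<in>B. h x < q \<and> fst \<pi>' q < fst \<pi>' (h x)} = h ` {q\<in>A. x < q \<and> fst \<pi> q < fst \<pi> x}"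
    using img mono eq x by auto
  have s2: "{q\<in>B. q < h x \<and> fst \<pi>' q < fst \<pi>' (h x)} = h ` {q\<in>A. q < x \<and> fst \<pi> q < fst \<pi> x}"
    using img mono eq x by auto
  have c1: "card (h ` {q\<in>A. x < q \<and> fst \<pi> q < fst \<pi> x}) = card {q\<in>A. x < q \<and> fst \<pi> q < fst \<pi> x}"
    by (rule card_image) (rule inj_on_subset[OF inj], auto)
  have c2: "card (h ` {q\<in>A. q < x \<and> fst \<pi> q < fst \<pi> x}) = card {q\<in>A. q < x \<and> fst \<pi> q < fst \<pi> x}"
    by (rule card_image) (rule inj_on_subset[OF inj], auto)
  show ?thesis unfolding Lterm_def s1 s2 c1 c2 using eq x by simp
qed

lemma ins_l_facts:
  assumes pi: "\<pi> \<in> Grn r (n-1)" and c: "c \<in> {1..n}"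
  shows "fst (ins_l n \<pi> c e) c = n" "snd (ins_l n \<pi> c e) c = e"
    "\<forall>x\<in>{1..n}-{c}. fst (ins_l n \<pi> c e) x = fst \<pi> (rho n c x) \<and> snd (ins_l n \<pi> c e) x = snd \<pi> (rho n c x)"
    "\<forall>x\<in>{1..n}-{c}. fst \<pi> (rho n c x) \<in> {1..n-1} \<and> e = e"
proof -
  have s: "fst \<pi> permutes {1..n-1}" using Grn_perm[OF pi] .
  show "fst (ins_l n \<pi> c e) c = n" using perm_n[OF s] by (simp add: ins_l_def rho_def)
  show "snd (ins_l n \<pi> c e) c = e" by (simp add: ins_l_def)
  show "\<forall>x\<in>{1..n}-{c}. fst (ins_l n \<pi> c e) x = fst \<pi> (rho n c x) \<and> snd (ins_l n \<pi> c e) x = snd \<pi> (rho n c x)"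
    by (simp add: ins_l_def)
  show "\<forall>x\<in>{1..n}-{c}. fst \<pi> (rho n c x) \<in> {1..n-1} \<and> e = e"
    using rho_image[OF c] perm_range[OF s] by blast
qed

lemma Lf_ins_l:
  assumes pi: "\<pi> \<in> Grn r (n-1)" and c: "c \<in> {1..n}"
  shows "Lf n (ins_l n \<pi> c e) = Lf (n-1) \<pi> + (n - c) + (if e > 0 then 2 * (c - 1) + e else 0)"
proof -
  define A where "A = {1..n} - {c}"
  define \<pi>2 where "\<pi>2 = ins_l n \<pi> c e"
  note F = ins_l_facts[OF pi c, where e=e, folded \<pi>2_def A_def]
  have small: "x \<in> A \<Longrightarrow> fst \<pi>2 x < n" for x using F(3,4) by fastforce
  have t1: "Lterm {1..n} \<pi>2 x = Lterm A \<pi>2 x" if x: "x \<in> A" for x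
  proof -
    have "{q\<in>{1..n}. x < q \<and> fst \<pi>2 q < fst \<pi>2 x} = {q\<in>A. x < q \<and> fst \<pi>2 q < fst \<pi>2 x}"
      using F(1) small[OF x] by (auto simp: A_def)
    moreover have "{q\<in>{1..n}. q < x \<and> fst \<pi>2 q < fst \<pi>2 x} = {q\<in>A. q < x \<and> fst \<pi>2 q < fst \<pi>2 x}"
      using F(1) small[OF x] by (auto simp: A_def)
    ultimately show ?thesis by (simp add: Lterm_def)
  qed
  have t2: "Lterm A \<pi>2 x = Lterm {1..n-1} \<pi> (rho n c x)" if x: "x \<in> A" for x
    by (rule Lterm_transfer[OF rho_bij[OF c, folded A_def] _ F(3) x]) (use rho_mono[OF c] in \<open>auto simp: A_def\<close>)
  have tc: "Lterm {1..n} \<pi>2 c = (n - c) + (if e > 0 then 2 * (c - 1) + e else 0)"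
  proof -
    have "{q\<in>{1..n}. c < q \<and> fst \<pi>2 q < fst \<pi>2 c} = {c<..n}" using F(1) small by (auto simp: A_def)
    moreover have "{q\<in>{1..n}. q < c \<and> fst \<pi>2 q < fst \<pi>2 c} = {1..<c}" using F(1) small c by (auto simp: A_def)
    ultimately show ?thesis using F(2) by (simp add: Lterm_def)
  qed
  have "Lf n \<pi>2 = Lterm {1..n} \<pi>2 c + (\<Sum>x\<in>A. Lterm {1..n} \<pi>2 x)"
    unfolding Lf_def LS_def A_def by (rule sum.remove) (use c in auto)
  also have "(\<Sum>x\<in>A. Lterm {1..n} \<pi>2 x) = (\<Sum>x\<in>A. Lterm {1..n-1} \<pi> (rho n c x))"
    using t1 t2 by simp
  also have "\<dots> = Lf (n-1) \<pi>" unfolding Lf_def LS_def A_def by (rule sum.reindex_bij_betw[OF rho_bij[OF c]])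
  finally show ?thesis using tc by (simp add: \<pi>2_def)
qed

lemma set_transfer:
  assumes "bij_betw h A B" "\<forall>x\<in>A. F x = G (h x) \<and> (P x \<longleftrightarrow> Q (h x))"
  shows "{F x |x. x \<in> A \<and> P x} = {G y |y. y \<in> B \<and> Q y}"
proof -
  have img: "h ` A = B" using assms(1) by (simp add: bij_betw_def)
  show ?thesis
  proof (rule set_eqI, rule iffI)
    fix v assume "v \<in> {F x |x. x \<in> A \<and> P x}"
    then obtain x where "v = F x" "x \<in> A" "P x" by blast
    then show "v \<in> {G y |y. y \<in> B \<and> Q y}" using assms(2) img by blast
  next
    fix v assume "v \<in> {G y |y. y \<in> B \<and> Q y}"
    then obtain y where y: "v = G y" "y \<in> B" "Q y" by blast
    then obtain x where "x \<in> A" "y = h x" using img by blast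
    moreover from this have "F x = v" "P x" using assms(2) y by auto
    ultimately show "v \<in> {F x |x. x \<in> A \<and> P x}" by blast
  qed
qed

lemma ball_transfer: "h ` A = B \<Longrightarrow> (\<forall>j\<in>A. P (h j)) = (\<forall>j\<in>B. P j)"
  by blast

lemma Rmil_alt: "Rmil n \<pi> t = {fst \<pi> i |i. i \<in> {1..n} \<and> (\<forall>j\<in>{1..n}. i < j \<longrightarrow> fst \<pi> i < fst \<pi> j) \<and> snd \<pi> i = t}"
  unfolding Rmil_def by (rule arg_cong[where f = Collect]) (auto simp: fun_eq_iff)

lemma Lmil_alt: "Lmil n \<pi> t = {fst \<pi> i |i. i \<in> {1..n} \<and> (\<forall>j\<in>{1..n}. j < i \<longrightarrow> fst \<pi> i < fst \<pi> j) \<and> snd \<pi> i = t}"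
  unfolding Lmil_def by (rule arg_cong[where f = Collect]) (auto simp: fun_eq_iff)

lemma split_set: "c \<in> S \<Longrightarrow> {F i |i. i \<in> S \<and> P i} = {F i |i. i \<in> S - {c} \<and> P i} \<union> (if P c then {F c} else {})"
  by auto

lemma Rmil_ins_l:
  assumes pi: "\<pi> \<in> Grn r (n-1)" and c: "c \<in> {1..n}"
  shows "Rmil n (ins_l n \<pi> c e) t = Rmil (n-1) \<pi> t \<union> (if c = n \<and> e = t then {n} else {})"
proof -
  define A where "A = {1..n} - {c}"
  define \<pi>2 where "\<pi>2 = ins_l n \<pi> c e"
  note F = ins_l_facts[OF pi c, where e=e, folded \<pi>2_def A_def]
  have small: "x \<in> A \<Longrightarrow> fst \<pi>2 x < n" for x using F(3,4) by fastforce
  have s: "fst \<pi> permutes {1..n-1}" using Grn_perm[OF pi] .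
  have img: "rho n c ` A = {1..n-1}" using rho_image[OF c] A_def by simp
  have P: "((\<forall>j\<in>{1..n}. i < j \<longrightarrow> fst \<pi>2 i < fst \<pi>2 j) \<and> snd \<pi>2 i = t) \<longleftrightarrow>
       ((\<forall>j\<in>{1..n-1}. rho n c i < j \<longrightarrow> fst \<pi> (rho n c i) < fst \<pi> j) \<and> snd \<pi> (rho n c i) = t)" if i: "i \<in> A" for i
  proof -
    have "(\<forall>j\<in>{1..n}. i < j \<longrightarrow> fst \<pi>2 i < fst \<pi>2 j) \<longleftrightarrow> (\<forall>j\<in>A. i < j \<longrightarrow> fst \<pi>2 i < fst \<pi>2 j)"
      using F(1) small[OF i] by (auto simp: A_def)
    also have "\<dots> \<longleftrightarrow> (\<forall>j\<in>A. rho n c i < rho n c j \<longrightarrow> fst \<pi> (rho n c i) < fst \<pi> (rho n c j))"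
      using F(3) rho_mono[OF c] i by (auto simp: A_def)
    also have "\<dots> \<longleftrightarrow> (\<forall>j\<in>{1..n-1}. rho n c i < j \<longrightarrow> fst \<pi> (rho n c i) < fst \<pi> j)"
      using ball_transfer[OF img, of "\<lambda>j. rho n c i < j \<longrightarrow> fst \<pi> (rho n c i) < fst \<pi> j"] by simp
    finally show ?thesis using F(3) i by (simp add: A_def)
  qed
  have "Rmil n \<pi>2 t = {fst \<pi>2 i |i. i \<in> A \<and> ((\<forall>j\<in>{1..n}. i < j \<longrightarrow> fst \<pi>2 i < fst \<pi>2 j) \<and> snd \<pi>2 i = t)}
        \<union> (if (\<forall>j\<in>{1..n}. c < j \<longrightarrow> fst \<pi>2 c < fst \<pi>2 j) \<and> snd \<pi>2 c = t then {fst \<pi>2 c} else {})"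
    unfolding Rmil_alt A_def by (rule split_set[OF c])
  also have "{fst \<pi>2 i |i. i \<in> A \<and> ((\<forall>j\<in>{1..n}. i < j \<longrightarrow> fst \<pi>2 i < fst \<pi>2 j) \<and> snd \<pi>2 i = t)} = Rmil (n-1) \<pi> t"
    unfolding Rmil_alt by (rule set_transfer[OF rho_bij[OF c, folded A_def]]) (use F(3) P in \<open>auto simp: A_def\<close>)
  also have "((\<forall>j\<in>{1..n}. c < j \<longrightarrow> fst \<pi>2 c < fst \<pi>2 j) \<and> snd \<pi>2 c = t) \<longleftrightarrow> c = n \<and> e = t"
  proof -
    have "(\<forall>j\<in>{1..n}. c < j \<longrightarrow> fst \<pi>2 c < fst \<pi>2 j) \<longleftrightarrow> c = n"
    proof
      assume h: "\<forall>j\<in>{1..n}. c < j \<longrightarrow> fst \<pi>2 c < fst \<pi>2 j"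
      show "c = n"
      proof (rule ccontr)
        assume "c \<noteq> n"
        then have "n \<in> A" "c < n" using c by (auto simp: A_def)
        then show False using h small[of n] F(1) c by auto
      qed
    qed (use c in auto)
    then show ?thesis using F(2) by simp
  qed
  finally show ?thesis unfolding \<pi>2_def[symmetric] F(1) .
qed

lemma Lmil_ins_l:
  assumes pi: "\<pi> \<in> Grn r (n-1)" and c: "c \<in> {1..n}"
  shows "Lmil n (ins_l n \<pi> c e) t = Lmil (n-1) \<pi> t \<union> (if c = 1 \<and> e = t then {n} else {})"
proof -
  define A where "A = {1..n} - {c}"
  define \<pi>2 where "\<pi>2 = ins_l n \<pi> c e"
  note F = ins_l_facts[OF pi c, where e=e, folded \<pi>2_def A_def]
  have small: "x \<in> A \<Longrightarrow> fst \<pi>2 x < n" for x using F(3,4) by fastforce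
  have s: "fst \<pi> permutes {1..n-1}" using Grn_perm[OF pi] .
  have img: "rho n c ` A = {1..n-1}" using rho_image[OF c] A_def by simp
  have P: "((\<forall>j\<in>{1..n}. j < i \<longrightarrow> fst \<pi>2 i < fst \<pi>2 j) \<and> snd \<pi>2 i = t) \<longleftrightarrow>
       ((\<forall>j\<in>{1..n-1}. j < rho n c i \<longrightarrow> fst \<pi> (rho n c i) < fst \<pi> j) \<and> snd \<pi> (rho n c i) = t)" if i: "i \<in> A" for i
  proof -
    have "(\<forall>j\<in>{1..n}. j < i \<longrightarrow> fst \<pi>2 i < fst \<pi>2 j) \<longleftrightarrow> (\<forall>j\<in>A. j < i \<longrightarrow> fst \<pi>2 i < fst \<pi>2 j)"
      using F(1) small[OF i] by (auto simp: A_def)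
    also have "\<dots> \<longleftrightarrow> (\<forall>j\<in>A. rho n c j < rho n c i \<longrightarrow> fst \<pi> (rho n c i) < fst \<pi> (rho n c j))"
      using F(3) rho_mono[OF c] i by (auto simp: A_def)
    also have "\<dots> \<longleftrightarrow> (\<forall>j\<in>{1..n-1}. j < rho n c i \<longrightarrow> fst \<pi> (rho n c i) < fst \<pi> j)"
      using ball_transfer[OF img, of "\<lambda>j. j < rho n c i \<longrightarrow> fst \<pi> (rho n c i) < fst \<pi> j"] by simp
    finally show ?thesis using F(3) i by (simp add: A_def)
  qed
  have "Lmil n \<pi>2 t = {fst \<pi>2 i |i. i \<in> A \<and> ((\<forall>j\<in>{1..n}. j < i \<longrightarrow> fst \<pi>2 i < fst \<pi>2 j) \<and> snd \<pi>2 i = t)}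
        \<union> (if (\<forall>j\<in>{1..n}. j < c \<longrightarrow> fst \<pi>2 c < fst \<pi>2 j) \<and> snd \<pi>2 c = t then {fst \<pi>2 c} else {})"
    unfolding Lmil_alt A_def by (rule split_set[OF c])
  also have "{fst \<pi>2 i |i. i \<in> A \<and> ((\<forall>j\<in>{1..n}. j < i \<longrightarrow> fst \<pi>2 i < fst \<pi>2 j) \<and> snd \<pi>2 i = t)} = Lmil (n-1) \<pi> t"
    unfolding Lmil_alt by (rule set_transfer[OF rho_bij[OF c, folded A_def]]) (use F(3) P in \<open>auto simp: A_def\<close>)
  also have "((\<forall>j\<in>{1..n}. j < c \<longrightarrow> fst \<pi>2 c < fst \<pi>2 j) \<and> snd \<pi>2 c = t) \<longleftrightarrow> c = 1 \<and> e = t"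
  proof -
    have "(\<forall>j\<in>{1..n}. j < c \<longrightarrow> fst \<pi>2 c < fst \<pi>2 j) \<longleftrightarrow> c = 1"
    proof
      assume h: "\<forall>j\<in>{1..n}. j < c \<longrightarrow> fst \<pi>2 c < fst \<pi>2 j"
      show "c = 1"
      proof (rule ccontr)
        assume "c \<noteq> 1"
        then have "1 \<in> A" "1 < c" using c by (auto simp: A_def)
        then show False using h small[of 1] F(1) c by auto
      qed
    qed (use c in auto)
    then show ?thesis using F(2) by simp
  qed
  finally show ?thesis unfolding \<pi>2_def[symmetric] F(1) .
qed

definition LRM :: "nat \<Rightarrow> cperm \<Rightarrow> (nat \<times> nat \<times> nat) set" where
  "LRM n \<pi> = {(p, fst \<pi> p, snd \<pi> p) |p. p \<in> {1..n} \<and> (\<forall>j\<in>{1..<p}. fst \<pi> j < fst \<pi> p)}"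

lemma LRM_ins:
  assumes c: "c \<in> {1..n}" and sc: "fst \<pi> c = n" and zc: "snd \<pi> c = col"
    and same: "\<forall>p<c. fst \<pi> p = fst \<pi>' p \<and> snd \<pi> p = snd \<pi>' p"
    and le: "\<forall>p\<in>{1..n}. fst \<pi> p \<le> n" and s': "fst \<pi>' permutes {1..n-1}"
  shows "LRM n \<pi> = {x \<in> LRM (n-1) \<pi>'. fst x < c} \<union> {(c, n, col)}"
proof -
  have small: "j \<in> {1..n-1} \<Longrightarrow> fst \<pi>' j < n" for j using perm_range[OF s'] by fastforce
  show ?thesis
  proof (rule set_eqI, rule iffI)
    fix x assume "x \<in> LRM n \<pi>"
    then obtain p where x: "x = (p, fst \<pi> p, snd \<pi> p)" "p \<in> {1..n}" "\<forall>j\<in>{1..<p}. fst \<pi> j < fst \<pi> p"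
      by (auto simp: LRM_def)
    consider "p < c" | "p = c" | "c < p" by linarith
    then show "x \<in> {x \<in> LRM (n-1) \<pi>'. fst x < c} \<union> {(c, n, col)}"
    proof cases
      case 1
      then have "p \<in> {1..n-1}" using x c by auto
      moreover have "\<forall>j\<in>{1..<p}. fst \<pi>' j < fst \<pi>' p" using x(3) same 1 by auto
      ultimately show ?thesis using x 1 same by (auto simp: LRM_def)
    next
      case 2 then show ?thesis using x sc zc by auto
    next
      case 3
      then have "c \<in> {1..<p}" using c by auto
      then show ?thesis using x(3) sc le x(2) by fastforce
    qed
  next
    fix x assume "x \<in> {x \<in> LRM (n-1) \<pi>'. fst x < c} \<union> {(c, n, col)}"
    then consider "x = (c, n, col)" | p where "x = (p, fst \<pi>' p, snd \<pi>' p)" "p \<in> {1..n-1}" "\<forall>j\<in>{1..<p}. fst \<pi>' j < fst \<pi>' p" "p < c"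
      by (auto simp: LRM_def)
    then show "x \<in> LRM n \<pi>"
    proof cases
      case 1
      have "\<forall>j\<in>{1..<c}. fst \<pi> j < fst \<pi> c" using same small sc c by auto
      then show ?thesis using 1 c sc zc unfolding LRM_def by force
    next
      case 2
      have "\<forall>j\<in>{1..<p}. fst \<pi> j < fst \<pi> p" using 2 same by auto
      moreover have "p \<in> {1..n}" using 2 by auto
      ultimately show ?thesis using 2 same unfolding LRM_def by force
    qed
  qed
qed

lemma LRM_ins_l:
  assumes pi: "\<pi> \<in> Grn r (n-1)" and c: "c \<in> {1..n}"
  shows "LRM n (ins_l n \<pi> c e) = {x \<in> LRM (n-1) \<pi>. fst x < c} \<union> {(c, n, e)}"
proof (rule LRM_ins[OF c])
  have s: "fst \<pi> permutes {1..n-1}" using Grn_perm[OF pi] .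
  show "fst (ins_l n \<pi> c e) c = n" "snd (ins_l n \<pi> c e) c = e" using ins_l_facts[OF pi c] by auto
  show "\<forall>p<c. fst (ins_l n \<pi> c e) p = fst \<pi> p \<and> snd (ins_l n \<pi> c e) p = snd \<pi> p" by (simp add: ins_l_def rho_def)
  show "fst \<pi> permutes {1..n-1}" using s .
  have "fst (ins_l n \<pi> c e) permutes {1..n}" unfolding ins_l_def using permutes_compose[OF rho_permutes[OF c] perm_grow[OF s]] by simp
  then show "\<forall>p\<in>{1..n}. fst (ins_l n \<pi> c e) p \<le> n" using perm_range by fastforce
qed

lemma LRM_ins_s:
  assumes pi: "\<pi> \<in> Grn r (n-1)" and c: "c \<in> {1..n}"
  shows "LRM n (ins_s r n \<pi> c e) = {x \<in> LRM (n-1) \<pi>. fst x < c} \<union> {(c, n, (r - e) mod r)}"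
proof (rule LRM_ins[OF c])
  have s: "fst \<pi> permutes {1..n-1}" using Grn_perm[OF pi] .
  show "fst (ins_s r n \<pi> c e) c = n" using perm_n[OF s] by (simp add: ins_s_def)
  show "snd (ins_s r n \<pi> c e) c = (r - e) mod r" by (simp add: ins_s_def)
  show "\<forall>p<c. fst (ins_s r n \<pi> c e) p = fst \<pi> p \<and> snd (ins_s r n \<pi> c e) p = snd \<pi> p" using c by (auto simp: ins_s_def)
  show "fst \<pi> permutes {1..n-1}" using s .
  have t: "Transposition.transpose c n permutes {1..n}" using c by (intro permutes_swap_id) auto
  have "fst (ins_s r n \<pi> c e) permutes {1..n}" unfolding ins_s_def using permutes_compose[OF t perm_grow[OF s]] by simp
  then show "\<forall>p\<in>{1..n}. fst (ins_s r n \<pi> c e) p \<le> n" using perm_range by fastforce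
qed

lemma mod_add_sub: "(e::nat) \<le> r \<Longrightarrow> ((x + e) mod r + r - e) mod r = x mod r"
proof -
  assume e: "e \<le> r"
  have "((x + e) mod r + r - e) mod r = ((x + e) mod r + (r - e)) mod r" using e by simp
  also have "\<dots> = (x + e + (r - e)) mod r" by (simp add: mod_add_left_eq)
  also have "x + e + (r - e) = x + r" using e by simp
  finally show ?thesis by simp
qed

lemma sor_rec_cong:
  assumes "r \<ge> 1"
  shows "(\<tau>2, y2) \<in> Grn r k \<Longrightarrow> \<forall>p\<in>{1..k}. \<tau> p = \<tau>2 p \<and> y p = y2 p \<Longrightarrow> sor_rec r k \<tau> y = sor_rec r k \<tau>2 y2"
proof (induction k arbitrary: \<tau> y \<tau>2 y2)
  case 0 then show ?case by simp
next
  case (Suc k)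
  define j where "j = Suc k"
  have s2: "\<tau>2 permutes {1..j}" using Suc.prems(1) j_def by (simp add: Grn_def)
  have y2r: "\<And>i. y2 i < r" using Grn_col[OF Suc.prems(1) assms] by simp
  have y20: "\<And>i. i \<notin> {1..j} \<Longrightarrow> y2 i = 0" using Suc.prems(1) j_def by (simp add: Grn_def)
  have pred: "(\<lambda>p. p \<in> {1..j} \<and> \<tau> p = j) = (\<lambda>p. p \<in> {1..j} \<and> \<tau>2 p = j)"
    using Suc.prems(2) j_def by (auto simp: fun_eq_iff)
  define c where "c = (THE p. p \<in> {1..j} \<and> \<tau>2 p = j)"
  have cc: "c \<in> {1..j} \<and> \<tau>2 c = j"
  proof -
    have "inv \<tau>2 j \<in> {1..j} \<and> \<tau>2 (inv \<tau>2 j) = j" using perm_inv_range[OF s2, of j] permutes_inverses(1)[OF s2] j_def by auto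
    moreover have "\<And>p. p \<in> {1..j} \<and> \<tau>2 p = j \<Longrightarrow> p = inv \<tau>2 j" using perm_inv_eq[OF s2] by metis
    ultimately have "c = inv \<tau>2 j" unfolding c_def by (rule the_equality)
    then show ?thesis using perm_inv_range[OF s2, of j] permutes_inverses(1)[OF s2] j_def by auto
  qed
  have c1: "(THE p. p \<in> {1..j} \<and> \<tau> p = j) = c" using pred c_def by simp
  have yc: "y c = y2 c" using Suc.prems(2) cc j_def by auto
  define e where "e = (r - y2 c mod r) mod r"
  define \<tau>3 where "\<tau>3 = \<tau>2 \<circ> Transposition.transpose c j"
  define y3 where "y3 = (if c < j then y2(c := (y2 j + r - e) mod r) else y2)(j := 0)"
  have t: "Transposition.transpose c j permutes {1..j}" using cc j_def by (intro permutes_swap_id) auto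
  have G3: "(\<tau>3, y3) \<in> Grn r k"
  proof -
    have "\<tau>3 permutes {1..j}" unfolding \<tau>3_def using permutes_compose[OF t s2] .
    then have "\<tau>3 permutes {1..j-1}" by (rule perm_shrink) (use cc in \<open>simp add: \<tau>3_def\<close>)
    moreover have "\<forall>i. y3 i < r" using y2r assms by (simp add: y3_def)
    moreover have "\<forall>i. i \<notin> {1..k} \<longrightarrow> y3 i = 0" using y20 cc j_def by (auto simp: y3_def)
    ultimately show ?thesis using j_def by (simp add: Grn_def)
  qed
  have A: "sor_rec r k (if c < j then \<tau>(c := \<tau> j) else \<tau>) (if c < j then y(c := (y j + r - e) mod r) else y) = sor_rec r k \<tau>3 y3"
    by (rule Suc.IH[OF G3]) (use Suc.prems(2) cc j_def in \<open>auto simp: \<tau>3_def y3_def\<close>)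
  have B: "sor_rec r k (if c < j then \<tau>2(c := \<tau>2 j) else \<tau>2) (if c < j then y2(c := (y2 j + r - e) mod r) else y2) = sor_rec r k \<tau>3 y3"
    by (rule Suc.IH[OF G3]) (use cc j_def in \<open>auto simp: \<tau>3_def y3_def\<close>)
  have L1: "sor_rec r (Suc k) \<tau> y = (j - c) + (if e > 0 then 2 * (c - 1) + e else 0) + sor_rec r k (if c < j then \<tau>(c := \<tau> j) else \<tau>) (if c < j then y(c := (y j + r - e) mod r) else y)"
    apply (subst sor_rec.simps)
    apply (unfold Let_def j_def[symmetric] c1 yc e_def[symmetric])
    apply (rule refl)
    done
  have L2: "sor_rec r (Suc k) \<tau>2 y2 = (j - c) + (if e > 0 then 2 * (c - 1) + e else 0) + sor_rec r k (if c < j then \<tau>2(c := \<tau>2 j) else \<tau>2) (if c < j then y2(c := (y2 j + r - e) mod r) else y2)"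
    apply (subst sor_rec.simps)
    apply (unfold Let_def j_def[symmetric] c_def[symmetric] e_def[symmetric])
    apply (rule refl)
    done
  show ?case using A B L1 L2 by simp
qed

lemma sor_ins_s:
  assumes pi: "\<pi> \<in> Grn r (n-1)" and c: "c \<in> {1..n}" and e: "e < r" and r: "r \<ge> 1"
  shows "sor r n (ins_s r n \<pi> c e) = (n - c) + (if e > 0 then 2 * (c - 1) + e else 0) + sor r (n-1) \<pi>"
proof -
  obtain s z where pis: "\<pi> = (s, z)" by force
  have s: "s permutes {1..n-1}" using pi by (simp add: pis Grn_def)
  have zr: "\<And>i. z i < r" using Grn_col[OF pi r] pis by simp
  obtain k where k: "n = Suc k" using c by (cases n) auto
  define \<tau> where "\<tau> = s \<circ> Transposition.transpose c n"
  define y where "y = (if c = n then z(n := (r - e) mod r) else z(c := (r - e) mod r, n := (z c + e) mod r))"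
  have ins: "ins_s r n \<pi> c e = (\<tau>, y)" by (simp add: ins_s_def pis \<tau>_def y_def)
  have t: "Transposition.transpose c n permutes {1..n}" using c by (intro permutes_swap_id) auto
  have P: "\<tau> permutes {1..n}" unfolding \<tau>_def using permutes_compose[OF t perm_grow[OF s]] .
  have tc: "\<tau> c = n" using perm_n[OF s] by (simp add: \<tau>_def)
  have the: "(THE p. p \<in> {1..n} \<and> \<tau> p = n) = c"
    by (rule the_equality) (use c tc perm_inj[OF P] in auto)
  have ee: "(r - y c mod r) mod r = e" using mod_neg_neg[OF e] by (simp add: y_def)
  have rec: "sor_rec r k (if c < n then \<tau>(c := \<tau> n) else \<tau>) (if c < n then y(c := (y n + r - e) mod r) else y) = sor_rec r k s z"
  proof (rule sor_rec_cong[OF r])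
    show "(s, z) \<in> Grn r k" using pi pis k by simp
    show "\<forall>p\<in>{1..k}. (if c < n then \<tau>(c := \<tau> n) else \<tau>) p = s p \<and> (if c < n then y(c := (y n + r - e) mod r) else y) p = z p"
    proof
      fix p assume p: "p \<in> {1..k}"
      then have pn: "p \<noteq> n" using k by auto
      show "(if c < n then \<tau>(c := \<tau> n) else \<tau>) p = s p \<and> (if c < n then y(c := (y n + r - e) mod r) else y) p = z p"
      proof (cases "c < n")
        case True
        have "((z c + e) mod r + r - e) mod r = z c" using mod_add_sub[of e r "z c"] e zr[of c] by simp
        then show ?thesis using True pn by (auto simp: \<tau>_def y_def)
      next
        case False
        then have "c = n" using c by auto
        then show ?thesis using pn by (simp add: \<tau>_def y_def)
      qed
    qed
  qed
  have "sor r n (ins_s r n \<pi> c e) = sor_rec r (Suc k) \<tau> y" unfolding sor_def ins fst_conv snd_conv by (simp only: k)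
  also have "\<dots> = (n - c) + (if e > 0 then 2 * (c - 1) + e else 0) + sor_rec r k (if c < n then \<tau>(c := \<tau> n) else \<tau>) (if c < n then y(c := (y n + r - e) mod r) else y)"
    apply (subst sor_rec.simps)
    apply (unfold Let_def k[symmetric] the ee)
    apply (rule refl)
    done
  finally show ?thesis using rec k by (simp add: sor_def pis)
qed

definition gg :: "('b \<Rightarrow> 'b) \<Rightarrow> ('b \<Rightarrow> bool) \<Rightarrow> 'b \<Rightarrow> nat \<Rightarrow> nat" where
  "gg a' P x0 k = k + card {l. l < k \<and> P ((a' ^^ l) x0)}"

lemma gg_0[simp]: "gg a' P x0 0 = 0" by (simp add: gg_def)

lemma gg_Suc: "gg a' P x0 (Suc k) = gg a' P x0 k + (if P ((a' ^^ k) x0) then 2 else 1)"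
proof -
  have "{l. l < Suc k \<and> P ((a' ^^ l) x0)} = {l. l < k \<and> P ((a' ^^ l) x0)} \<union> (if P ((a' ^^ k) x0) then {k} else {})"
    by (auto simp: less_Suc_eq)
  moreover have "finite {l. l < k \<and> P ((a' ^^ l) x0)}" by simp
  ultimately show ?thesis by (simp add: gg_def)
qed

lemma gg_mono: "k < l \<Longrightarrow> gg a' P x0 k < gg a' P x0 l"
proof (induction l)
  case 0 then show ?case by simp
next
  case (Suc l) then show ?case by (cases "k = l") (auto simp: gg_Suc)
qed

lemma gg_ge: "k \<le> gg a' P x0 k" by (simp add: gg_def)

lemma gg_cover: "\<exists>k. gg a' P x0 k \<le> m \<and> m < gg a' P x0 (Suc k)"
proof (induction m)
  case 0 then show ?case by (intro exI[of _ 0]) (simp add: gg_Suc)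
next
  case (Suc m)
  then obtain k where k: "gg a' P x0 k \<le> m" "m < gg a' P x0 (Suc k)" by blast
  show ?case
  proof (cases "Suc m < gg a' P x0 (Suc k)")
    case True then show ?thesis using k by (intro exI[of _ k]) simp
  next
    case False
    then have "Suc m = gg a' P x0 (Suc k)" using k by simp
    then show ?thesis using gg_mono[of "Suc k" "Suc (Suc k)" a' P x0] by (intro exI[of _ "Suc k"]) simp
  qed
qed

lemma gg_cases:
  obtains k where "m = gg a' P u k" | k where "m = gg a' P u k + 1" "P ((a' ^^ k) u)"
proof -
  obtain k where k: "gg a' P u k \<le> m" "m < gg a' P u (Suc k)" using gg_cover[where a'=a' and P=P and m=m] by blast
  show thesis
  proof (cases "P ((a' ^^ k) u)")
    case True
    then have "m < gg a' P u k + 2" using k by (simp add: gg_Suc)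
    then have "m = gg a' P u k \<or> m = gg a' P u k + 1" using k(1) by linarith
    then show thesis using that True by blast
  next
    case False
    then have "m < gg a' P u k + 1" using k by (simp add: gg_Suc)
    then have "m = gg a' P u k" using k(1) by linarith
    then show thesis using that by blast
  qed
qed

lemma subdiv:
  assumes h1: "\<And>k. \<not> P ((a' ^^ k) u) \<Longrightarrow> a ((a' ^^ k) u) = a' ((a' ^^ k) u)"
      and h2: "\<And>k. P ((a' ^^ k) u) \<Longrightarrow> a (a ((a' ^^ k) u)) = a' ((a' ^^ k) u)"
  shows "(a' ^^ k) u = (a ^^ (gg a' P u k)) u"
proof (induction k)
  case 0 then show ?case by simp
next
  case (Suc k)
  show ?case
  proof (cases "P ((a' ^^ k) u)")
    case True
    have "(a' ^^ Suc k) u = a (a ((a' ^^ k) u))" using h2[OF True] by simp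
    also have "\<dots> = (a ^^ (gg a' P u k + 2)) u" using Suc by simp
    finally show ?thesis using True by (simp add: gg_Suc)
  next
    case False
    have "(a' ^^ Suc k) u = a ((a' ^^ k) u)" using h1[OF False] by simp
    also have "\<dots> = (a ^^ (gg a' P u k + 1)) u" using Suc by simp
    finally show ?thesis using False by (simp add: gg_Suc)
  qed
qed

lemma orb_subdiv:
  assumes h1: "\<And>k. \<not> P ((a' ^^ k) x0) \<Longrightarrow> a ((a' ^^ k) x0) = a' ((a' ^^ k) x0)"
      and h2: "\<And>k. P ((a' ^^ k) x0) \<Longrightarrow> a (a ((a' ^^ k) x0)) = a' ((a' ^^ k) x0)"
  shows "{(a ^^ m) x0 |m. True} = {(a' ^^ m) x0 |m. True} \<union> {a ((a' ^^ k) x0) |k. P ((a' ^^ k) x0)}"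
proof (rule set_eqI, rule iffI)
  fix y assume "y \<in> {(a ^^ m) x0 |m. True}"
  then obtain m where y: "y = (a ^^ m) x0" by blast
  show "y \<in> {(a' ^^ m) x0 |m. True} \<union> {a ((a' ^^ k) x0) |k. P ((a' ^^ k) x0)}"
  proof (rule gg_cases[where m=m and a'=a' and P=P and u=x0])
    fix k assume "m = gg a' P x0 k"
    then have "y = (a' ^^ k) x0" using y subdiv[where P=P and a=a and a'=a' and u=x0 and k=k, OF h1 h2] by simp
    then show ?thesis by blast
  next
    fix k assume 2: "m = gg a' P x0 k + 1" "P ((a' ^^ k) x0)"
    then have "y = a ((a ^^ gg a' P x0 k) x0)" using y by simp
    then have "y = a ((a' ^^ k) x0)" using subdiv[where P=P and a=a and a'=a' and u=x0 and k=k, OF h1 h2] by simp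
    then show ?thesis using 2 by blast
  qed
next
  fix y assume "y \<in> {(a' ^^ m) x0 |m. True} \<union> {a ((a' ^^ k) x0) |k. P ((a' ^^ k) x0)}"
  then consider k where "y = (a' ^^ k) x0" | k where "y = a ((a' ^^ k) x0)" by blast
  then show "y \<in> {(a ^^ m) x0 |m. True}"
  proof cases
    case (1 k) then show ?thesis using subdiv[where P=P and a=a and a'=a' and u=x0 and k=k, OF h1 h2] by auto
  next
    case (2 k)
    then have "y = (a ^^ Suc (gg a' P x0 k)) x0" using subdiv[where P=P and a=a and a'=a' and u=x0 and k=k, OF h1 h2] by simp
    then show ?thesis by blast
  qed
qed

lemma perm_period: "s permutes {1..m::nat} \<Longrightarrow> \<exists>p>0. (s ^^ p) x = x"
  using permutation_self[of s x] permutation_permutes by blast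

lemma cycle_of_same:
  assumes s: "s permutes {1..m::nat}" and y: "y \<in> cycle_of s x"
  shows "cycle_of s y = cycle_of s x"
proof -
  obtain j where j: "y = (s ^^ j) x" using y by (auto simp: cycle_of_def)
  obtain p where p: "p > 0" "(s ^^ p) x = x" using perm_period[OF s] by blast
  show ?thesis
  proof (rule set_eqI, rule iffI)
    fix v assume "v \<in> cycle_of s y"
    then obtain k where "v = (s ^^ k) y" by (auto simp: cycle_of_def)
    then have "v = (s ^^ (k + j)) x" using j by (simp add: funpow_add)
    then show "v \<in> cycle_of s x" by (auto simp: cycle_of_def)
  next
    fix v assume "v \<in> cycle_of s x"
    then obtain k where v: "v = (s ^^ k) x" by (auto simp: cycle_of_def)
    have A: "(s ^^ ((k + p * j) mod p)) x = (s ^^ (k + p * j)) x" by (rule funpow_mod_eq[OF p(2)])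
    have B: "(s ^^ (k mod p)) x = (s ^^ k) x" by (rule funpow_mod_eq[OF p(2)])
    have C: "(k + p * j) mod p = k mod p" by simp
    have "(s ^^ (k + p * j)) x = (s ^^ k) x" using A B C by metis
    moreover have "j \<le> p * j" using p(1) by simp
    then have "k + p * j - j + j = k + p * j" by linarith
    ultimately have "v = (s ^^ (k + p * j - j + j)) x" using v by simp
    then have "v = (s ^^ (k + p * j - j)) y" using j by (simp add: funpow_add)
    then show "v \<in> cycle_of s y" by (auto simp: cycle_of_def)
  qed
qed

lemma cycle_of_self: "x \<in> cycle_of s x"
  unfolding cycle_of_def by (auto intro: exI[of _ 0])

lemma cycle_of_sub: "s permutes {1..m::nat} \<Longrightarrow> x \<in> {1..m} \<Longrightarrow> cycle_of s x \<subseteq> {1..m}"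
  unfolding cycle_of_def using permutes_in_funpow_image by fastforce

lemma cycle_of_fixed: "s x = x \<Longrightarrow> cycle_of s x = {x}"
proof -
  assume "s x = x"
  then have "(s ^^ m) x = x" for m by (induction m) auto
  then show ?thesis unfolding cycle_of_def by auto
qed

lemma cycle_of_step: "cycle_of s x = insert x (cycle_of s (s x))"
proof (rule set_eqI, rule iffI)
  fix v assume "v \<in> cycle_of s x"
  then obtain m where v: "v = (s ^^ m) x" by (auto simp: cycle_of_def)
  show "v \<in> insert x (cycle_of s (s x))"
  proof (cases m)
    case 0 then show ?thesis using v by simp
  next
    case (Suc k) then have "v = (s ^^ k) (s x)" using v by (simp add: funpow_swap1)
    then show ?thesis by (auto simp: cycle_of_def)
  qed
next
  fix v assume "v \<in> insert x (cycle_of s (s x))"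
  then consider "v = x" | k where "v = (s ^^ k) (s x)" by (auto simp: cycle_of_def)
  then show "v \<in> cycle_of s x"
  proof cases
    case 1 then show ?thesis by (simp add: cycle_of_self)
  next
    case (2 k) then have "v = (s ^^ Suc k) x" by (simp only: funpow_Suc_right o_apply)
    then show ?thesis unfolding cycle_of_def by blast
  qed
qed

lemma image_set_transfer:
  assumes "\<forall>B\<in>T. F (G B) = F' B \<and> (Q (G B) \<longleftrightarrow> Q' B)"
  shows "{F B' |B'. B' \<in> G ` T \<and> Q B'} = {F' B |B. B \<in> T \<and> Q' B}"
proof (rule set_eqI, rule iffI)
  fix v assume "v \<in> {F B' |B'. B' \<in> G ` T \<and> Q B'}"
  then obtain B where "B \<in> T" "v = F (G B)" "Q (G B)" by blast
  then show "v \<in> {F' B |B. B \<in> T \<and> Q' B}" using assms by auto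
next
  fix v assume "v \<in> {F' B |B. B \<in> T \<and> Q' B}"
  then obtain B where B: "B \<in> T" "v = F' B" "Q' B" by blast
  then have "v = F (G B)" "Q (G B)" "G B \<in> G ` T" using assms by auto
  then show "v \<in> {F B' |B'. B' \<in> G ` T \<and> Q B'}" by blast
qed

lemma mod_cancel3: "e \<le> (r::nat) \<Longrightarrow> ((a + e) mod r + (r - e) mod r + X) mod r = (a + X) mod r"
proof -
  assume e: "e \<le> r"
  have "((a + e) mod r + (r - e) mod r + X) mod r = (a + e + (r - e) + X) mod r"
    by (metis mod_add_eq mod_add_left_eq)
  also have "a + e + (r - e) + X = (a + X) + r" using e by simp
  finally show ?thesis by simp
qed

lemma Cyc_ins_s:
  assumes pi: "\<pi> \<in> Grn r (n-1)" and c: "c \<in> {1..n}" and e: "e < r" and r: "r \<ge> 1"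
  shows "Cyc r n (ins_s r n \<pi> c e) t = Cyc r (n-1) \<pi> t \<union> (if c = n \<and> (r - e) mod r = t then {n} else {})"
proof -
  obtain s z where pis: "\<pi> = (s, z)" by force
  have s: "s permutes {1..n-1}" using pi by (simp add: pis Grn_def)
  have zr: "\<And>i. z i < r" using Grn_col[OF pi r] pis by simp
  have sn: "s n = n" using perm_n[OF s] .
  define \<sigma> where "\<sigma> = s \<circ> Transposition.transpose c n"
  define zz where "zz = (if c = n then z(n := (r - e) mod r) else z(c := (r - e) mod r, n := (z c + e) mod r))"
  have ins: "ins_s r n \<pi> c e = (\<sigma>, zz)" by (simp add: ins_s_def pis \<sigma>_def zz_def)
  define T where "T = cycle_of s ` {1..n-1}"
  have Tsub: "B \<subseteq> {1..n-1} \<and> B \<noteq> {} \<and> finite B" if B: "B \<in> T" for B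
  proof -
    obtain i where i: "i \<in> {1..n-1}" "B = cycle_of s i" using B T_def by blast
    have "B \<subseteq> {1..n-1}" using cycle_of_sub[OF s i(1)] i(2) by simp
    moreover have "i \<in> B" using cycle_of_self i(2) by simp
    moreover have "finite B" using calculation(1) finite_subset by blast
    ultimately show ?thesis by blast
  qed
  have nT: "B \<in> T \<Longrightarrow> n \<notin> B" for B using Tsub[of B] nout[of n] by blast
  have MinB: "Min B < n" if B: "B \<in> T" for B
  proof -
    have "Min B \<in> B" using Tsub[OF B] by (intro Min_in) auto
    then have "Min B \<in> {1..n-1}" using Tsub[OF B] by blast
    then show ?thesis by auto
  qed
  have Cyc': "Cyc r (n-1) \<pi> t = {Min B |B. B \<in> T \<and> (\<Sum>k\<in>B. z k) mod r = t}"
    by (simp add: Cyc_def T_def pis)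
  show ?thesis
  proof (cases "c = n")
    case True
    have \<sigma>s: "\<sigma> = s" using True by (simp add: \<sigma>_def)
    have img: "cycle_of \<sigma> ` {1..n} = T \<union> {{n}}"
    proof -
      have "{1..n} = insert n {1..n-1}" using c by auto
      then show ?thesis using cycle_of_fixed[of s n, OF sn] \<sigma>s T_def by auto
    qed
    have sumT: "B \<in> T \<Longrightarrow> (\<Sum>k\<in>B. zz k) = (\<Sum>k\<in>B. z k)" for B
      using nT[of B] True by (intro sum.cong) (auto simp: zz_def)
    have "Cyc r n (ins_s r n \<pi> c e) t = {Min B |B. B \<in> T \<union> {{n}} \<and> (\<Sum>k\<in>B. zz k) mod r = t}"
      unfolding Cyc_def ins fst_conv snd_conv img ..
    also have "\<dots> = {Min B |B. B \<in> T \<and> (\<Sum>k\<in>B. zz k) mod r = t} \<union> (if (\<Sum>k\<in>{n}. zz k) mod r = t then {Min {n}} else {})"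
    proof (rule set_eqI, rule iffI)
      fix v assume "v \<in> {Min B |B. B \<in> T \<union> {{n}} \<and> (\<Sum>k\<in>B. zz k) mod r = t}"
      then obtain B where B: "v = Min B" "B \<in> T \<union> {{n}}" "(\<Sum>k\<in>B. zz k) mod r = t" by blast
      show "v \<in> {Min B |B. B \<in> T \<and> (\<Sum>k\<in>B. zz k) mod r = t} \<union> (if (\<Sum>k\<in>{n}. zz k) mod r = t then {Min {n}} else {})"
      proof (cases "B \<in> T")
        case True then show ?thesis using B by blast
      next
        case False then have "B = {n}" using B by blast
        then show ?thesis using B by simp
      qed
    next
      fix v assume v: "v \<in> {Min B |B. B \<in> T \<and> (\<Sum>k\<in>B. zz k) mod r = t} \<union> (if (\<Sum>k\<in>{n}. zz k) mod r = t then {Min {n}} else {})"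
      show "v \<in> {Min B |B. B \<in> T \<union> {{n}} \<and> (\<Sum>k\<in>B. zz k) mod r = t}"
      proof (cases "v \<in> {Min B |B. B \<in> T \<and> (\<Sum>k\<in>B. zz k) mod r = t}")
        case True then show ?thesis by blast
      next
        case False
        then have "v = Min {n}" "(\<Sum>k\<in>{n}. zz k) mod r = t" using v by (auto split: if_splits)
        then show ?thesis by blast
      qed
    qed
    also have "{Min B |B. B \<in> T \<and> (\<Sum>k\<in>B. zz k) mod r = t} = {Min B |B. B \<in> T \<and> (\<Sum>k\<in>B. z k) mod r = t}"
    proof -
      have "\<forall>B. (B \<in> T \<and> (\<Sum>k\<in>B. zz k) mod r = t) = (B \<in> T \<and> (\<Sum>k\<in>B. z k) mod r = t)" using sumT by auto
      then show ?thesis by simp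
    qed
    also have "(\<Sum>k\<in>{n}. zz k) mod r = (r - e) mod r" using True by (simp add: zz_def)
    finally show ?thesis using Cyc' True by simp
  next
    case False
    then have cn: "c \<in> {1..n-1}" using c by auto
    have sc: "s c \<in> {1..n-1}" using perm_range[OF s cn] .
    have \<sigma>c: "\<sigma> c = n" using sn by (simp add: \<sigma>_def)
    have \<sigma>n: "\<sigma> n = s c" by (simp add: \<sigma>_def)
    have \<sigma>x: "x \<noteq> c \<Longrightarrow> x \<noteq> n \<Longrightarrow> \<sigma> x = s x" for x by (simp add: \<sigma>_def)
    have orb: "cycle_of \<sigma> i = cycle_of s i \<union> (if c \<in> cycle_of s i then {n} else {})" if i: "i \<in> {1..n-1}" for i
    proof -
      have inS: "(s ^^ k) i \<in> {1..n-1}" for k using permutes_in_funpow_image[OF s i] .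
      have h1: "\<sigma> ((s ^^ k) i) = s ((s ^^ k) i)" if "\<not> (s ^^ k) i = c" for k
      proof -
        have "(s ^^ k) i \<noteq> n" using inS[of k] nout[of n] by metis
        then show ?thesis using \<sigma>x that by blast
      qed
      have h2: "\<And>k. (s ^^ k) i = c \<Longrightarrow> \<sigma> (\<sigma> ((s ^^ k) i)) = s ((s ^^ k) i)"
        using \<sigma>c \<sigma>n by simp
      have "cycle_of \<sigma> i = {(s ^^ m) i |m. True} \<union> {\<sigma> ((s ^^ k) i) |k. (s ^^ k) i = c}"
        unfolding cycle_of_def by (rule orb_subdiv[where P = "\<lambda>x. x = c", OF h1 h2])
      also have "{\<sigma> ((s ^^ k) i) |k. (s ^^ k) i = c} = (if c \<in> cycle_of s i then {n} else {})"
        using \<sigma>c by (auto simp: cycle_of_def)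
      finally show ?thesis by (simp add: cycle_of_def)
    qed
    have orbn: "cycle_of \<sigma> n = insert n (cycle_of s c)"
    proof -
      have "cycle_of \<sigma> n = insert n (cycle_of \<sigma> (s c))" using cycle_of_step[of \<sigma> n] \<sigma>n by simp
      also have "cycle_of \<sigma> (s c) = cycle_of s (s c) \<union> (if c \<in> cycle_of s (s c) then {n} else {})" using orb[OF sc] .
      also have "cycle_of s (s c) = cycle_of s c"
        by (rule cycle_of_same[OF s]) (simp add: cycle_of_step[of s c] cycle_of_self)
      finally show ?thesis using cycle_of_self[of c s] by auto
    qed
    define G where "G B = (if c \<in> B then insert n B else B)" for B
    have img: "cycle_of \<sigma> ` {1..n} = G ` T"
    proof -
      have "{1..n} = insert n {1..n-1}" using c by auto
      then have "cycle_of \<sigma> ` {1..n} = insert (cycle_of \<sigma> n) (cycle_of \<sigma> ` {1..n-1})" by simp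
      also have "cycle_of \<sigma> ` {1..n-1} = (\<lambda>i. G (cycle_of s i)) ` {1..n-1}" unfolding G_def using orb by (intro image_cong) auto
      also have "\<dots> = G ` T" unfolding T_def by (simp add: image_image)
      also have "cycle_of \<sigma> n = G (cycle_of s c)" using orbn cycle_of_self[of c s] by (simp add: G_def)
      finally have "cycle_of \<sigma> ` {1..n} = insert (G (cycle_of s c)) (G ` T)" .
      moreover have "G (cycle_of s c) \<in> G ` T" using cn T_def by blast
      ultimately show ?thesis by blast
    qed
    have key: "\<forall>B\<in>T. Min (G B) = Min B \<and> ((\<Sum>k\<in>G B. zz k) mod r = t \<longleftrightarrow> (\<Sum>k\<in>B. z k) mod r = t)"
    proof
      fix B assume B: "B \<in> T"
      have fin: "finite B" and ne: "B \<noteq> {}" and sub: "B \<subseteq> {1..n-1}" using Tsub[OF B] by auto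
      have nB: "n \<notin> B" using nT[OF B] .
      have zzB: "(\<Sum>k\<in>B - {c}. zz k) = (\<Sum>k\<in>B - {c}. z k)" using nB False by (intro sum.cong) (auto simp: zz_def)
      show "Min (G B) = Min B \<and> ((\<Sum>k\<in>G B. zz k) mod r = t \<longleftrightarrow> (\<Sum>k\<in>B. z k) mod r = t)"
      proof (cases "c \<in> B")
        case True
        have m: "Min (G B) = Min B" using MinB[OF B] fin ne True by (simp add: G_def Min_insert)
        have "(\<Sum>k\<in>G B. zz k) = zz n + (zz c + (\<Sum>k\<in>B - {c}. zz k))"
          using True fin nB sum.remove[OF fin True, of zz] by (simp add: G_def)
        also have "\<dots> = (z c + e) mod r + (r - e) mod r + (\<Sum>k\<in>B - {c}. z k)"
          using False zzB by (simp add: zz_def)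
        finally have "(\<Sum>k\<in>G B. zz k) mod r = (z c + (\<Sum>k\<in>B - {c}. z k)) mod r"
          using mod_cancel3[of e r "z c"] e by simp
        moreover have "(\<Sum>k\<in>B. z k) = z c + (\<Sum>k\<in>B - {c}. z k)" by (rule sum.remove[OF fin True])
        ultimately show ?thesis using m by simp
      next
        case f: False
        have "(\<Sum>k\<in>B. zz k) = (\<Sum>k\<in>B. z k)" using nB f False by (intro sum.cong) (auto simp: zz_def)
        then show ?thesis using f by (simp add: G_def)
      qed
    qed
    have "Cyc r n (ins_s r n \<pi> c e) t = {Min B' |B'. B' \<in> G ` T \<and> (\<Sum>k\<in>B'. zz k) mod r = t}"
      unfolding Cyc_def ins fst_conv snd_conv img ..
    also have "\<dots> = {Min B |B. B \<in> T \<and> (\<Sum>k\<in>B. z k) mod r = t}"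
      by (rule image_set_transfer[where F=Min and F'=Min and Q="\<lambda>B. (\<Sum>k\<in>B. zz k) mod r = t" and Q'="\<lambda>B. (\<Sum>k\<in>B. z k) mod r = t" and G=G, OF key])
    finally show ?thesis using Cyc' False by simp
  qed
qed

lemma Grnf_sub: "x \<in> Grnf r n f \<Longrightarrow> x \<in> Grn r n"
  by (cases x) (simp add: Grnf_def)

lemma cact_fst: "fst ((cact r \<pi> ^^ k) x) = (fst \<pi> ^^ k) (fst x)"
  by (induction k) (simp_all add: cact_def)

lemma Lmic_alt:
  assumes pi: "\<pi> \<in> Grn r n" and n: "n \<ge> 1"
  shows "Lmic r \<pi> t = {fst ((cact r \<pi> ^^ k) (1, 0)) |k. k \<ge> 1 \<and>
           (\<forall>l\<in>{1..<k}. fst ((cact r \<pi> ^^ k) (1, 0)) < fst ((cact r \<pi> ^^ l) (1, 0))) \<and> snd ((cact r \<pi> ^^ k) (1, 0)) = t}"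
proof -
  define w where "w k = (cact r \<pi> ^^ k) (1, 0)" for k
  have s: "fst \<pi> permutes {1..n}" using Grn_perm[OF pi] .
  have wr: "fst (w k) \<in> {1..n}" for k unfolding w_def cact_fst using permutes_in_funpow_image[OF s, of 1] n by simp
  obtain p where p: "p > 0" "(fst \<pi> ^^ p) 1 = 1" using perm_period[OF s] by blast
  have ex: "\<exists>m. m \<ge> 1 \<and> fst (w m) = 1" using p unfolding w_def cact_fst by (intro exI[of _ p]) simp
  define m where "m = (LEAST m. m \<ge> 1 \<and> fst (w m) = 1)"
  have m: "m \<ge> 1" "fst (w m) = 1" using LeastI_ex[OF ex] m_def by auto
  have "Lmic r \<pi> t = {fst (w k) |k. k \<in> {1..m} \<and> (\<forall>l\<in>{1..<k}. fst (w k) < fst (w l)) \<and> snd (w k) = t}"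
    unfolding Lmic_def Let_def w_def[symmetric] m_def[symmetric] ..
  also have "\<dots> = {fst (w k) |k. k \<ge> 1 \<and> (\<forall>l\<in>{1..<k}. fst (w k) < fst (w l)) \<and> snd (w k) = t}"
  proof -
    have "(k \<in> {1..m} \<and> (\<forall>l\<in>{1..<k}. fst (w k) < fst (w l))) \<longleftrightarrow> (k \<ge> 1 \<and> (\<forall>l\<in>{1..<k}. fst (w k) < fst (w l)))" for k
    proof (cases "k \<le> m")
      case False
      then have "m \<in> {1..<k}" using m by auto
      then have "\<not> (\<forall>l\<in>{1..<k}. fst (w k) < fst (w l))" using m(2) wr[of k] by fastforce
      then show ?thesis by blast
    qed auto
    then show ?thesis by blast
  qed
  finally show ?thesis unfolding w_def .
qed

lemma gg_mono_le: "k \<le> l \<Longrightarrow> gg a' P x0 k \<le> gg a' P x0 l"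
  using gg_mono[of k l a' P x0] by (cases "k = l") auto

lemma gg_less_iff: "gg a' P x0 l < gg a' P x0 k \<longleftrightarrow> l < k"
  using gg_mono[of l k a' P x0] gg_mono_le[of k l a' P x0] by (meson not_le)

lemma gg_pos: "k \<ge> 1 \<Longrightarrow> gg a' P x0 k \<ge> 1"
  using gg_ge[of k a' P x0] by simp

lemma gg_zero_iff: "gg a' P x0 k = 0 \<longleftrightarrow> k = 0"
  using gg_pos[of k a' P x0] by (cases k) auto

lemma Lmic_ins_s:
  assumes pi: "\<pi> \<in> Grn r (n-1)" and c: "c \<in> {1..n}" and e: "e < r" and r: "r \<ge> 1" and n: "n \<ge> 2"
  shows "Lmic r (ins_s r n \<pi> c e) t = Lmic r \<pi> t \<union> (if c = 1 \<and> (r - e) mod r = t then {n} else {})"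
proof -
  obtain s z where pis: "\<pi> = (s, z)" by force
  have s: "s permutes {1..n-1}" using pi by (simp add: pis Grn_def)
  have zr: "\<And>i. z i < r" using Grn_col[OF pi r] pis by simp
  have sn: "s n = n" using perm_n[OF s] .
  define \<sigma> where "\<sigma> = s \<circ> Transposition.transpose c n"
  define zz where "zz = (if c = n then z(n := (r - e) mod r) else z(c := (r - e) mod r, n := (z c + e) mod r))"
  have ins: "ins_s r n \<pi> c e = (\<sigma>, zz)" by (simp add: ins_s_def pis \<sigma>_def zz_def)
  have G2: "ins_s r n \<pi> c e \<in> Grn r n"
  proof -
    have "\<forall>i\<in>{1..n-1}. s i \<le> n" using perm_range[OF s] by fastforce
    then have "(\<pi>, c, e) \<in> Dom r n (\<lambda>_. n)" using pi c e by (auto simp: Dom_def Grnf_def pis)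
    then have "ins_s r n \<pi> c e \<in> Grnf r n (\<lambda>_. n)" by (intro ins_s_mem[OF r]) (use n in auto)
    then show ?thesis by (rule Grnf_sub)
  qed
  define a where "a = cact r (\<sigma>, zz)"
  define a' where "a' = cact r \<pi>"
  define w where "w k = (a ^^ k) (1, 0)" for k
  define w' where "w' k = (a' ^^ k) (1, 0)" for k
  have n1: "n - 1 \<ge> 1" using n by simp
  have w'r: "fst (w' k) \<in> {1..n-1}" for k
    unfolding w'_def a'_def cact_fst using permutes_in_funpow_image[OF s, of 1] n pis by simp
  have w'n: "fst (w' k) \<noteq> n" for k using w'r[of k] nout[of n] by metis
  have wr: "fst (w k) \<in> {1..n}" for k
    unfolding w_def a_def cact_fst using permutes_in_funpow_image[OF Grn_perm[OF G2], of 1] n ins by simp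
  have L1: "Lmic r \<pi> t = {fst (w' k) |k. k \<ge> 1 \<and> (\<forall>l\<in>{1..<k}. fst (w' k) < fst (w' l)) \<and> snd (w' k) = t}"
    unfolding w'_def a'_def by (rule Lmic_alt[OF pi n1])
  have L2: "Lmic r (ins_s r n \<pi> c e) t = {fst (w k) |k. k \<ge> 1 \<and> (\<forall>l\<in>{1..<k}. fst (w k) < fst (w l)) \<and> snd (w k) = t}"
    unfolding w_def a_def ins[symmetric] using Lmic_alt[OF G2] n by simp
  have ax: "fst x \<noteq> c \<Longrightarrow> fst x \<noteq> n \<Longrightarrow> a x = a' x" for x
    by (cases x) (auto simp: a_def a'_def cact_def \<sigma>_def zz_def pis)
  show ?thesis
  proof (cases "c = n")
    case True
    have "w k = w' k" for k
    proof (induction k)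
      case 0 then show ?case by (simp add: w_def w'_def)
    next
      case (Suc k)
      have "w (Suc k) = a (w k)" by (simp add: w_def)
      also have "\<dots> = a' (w' k)" using Suc ax[of "w' k"] w'n True by simp
      finally show ?case by (simp add: w'_def)
    qed
    then show ?thesis using L1 L2 True n by simp
  next
    case False
    have h1: "\<And>k. \<not> fst ((a' ^^ k) (1, 0)) = c \<Longrightarrow> a ((a' ^^ k) (1, 0)) = a' ((a' ^^ k) (1, 0))"
      using ax w'n unfolding w'_def by blast
    have h2: "a (a ((a' ^^ k) (1, 0))) = a' ((a' ^^ k) (1, 0))" if PP: "fst ((a' ^^ k) (1, 0)) = c" for k
    proof -
      obtain v where y: "(a' ^^ k) (1, 0) = (c, v)" using PP by (metis prod.collapse)
      have "a (a (c, v)) = (s c, ((z c + e) mod r + ((r - e) mod r + v) mod r) mod r)"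
        using False sn by (simp add: a_def cact_def \<sigma>_def zz_def)
      also have "((z c + e) mod r + ((r - e) mod r + v) mod r) mod r = (z c + v) mod r"
        using mod_cancel3[of e r "z c" v] e by (simp add: mod_add_right_eq add.assoc)
      finally show ?thesis using y by (simp add: a'_def cact_def pis)
    qed
    define g where "g = gg a' (\<lambda>x. fst x = c) (1, 0)"
    have wg: "w' k = w (g k)" for k unfolding w'_def w_def g_def by (rule subdiv[where P="\<lambda>x. fst x = c", OF h1 h2])
    have wg1: "w (g k + 1) = a (w' k)" for k using wg[of k] by (simp add: w_def)
    have afst: "fst (a (w' k)) = n" if "fst (w' k) = c" for k
      using that sn by (cases "w' k") (simp add: a_def cact_def \<sigma>_def)
    have cases: "thesis" if A1: "\<And>k. K = g k \<Longrightarrow> thesis" and A2: "\<And>k. K = g k + 1 \<Longrightarrow> fst (w' k) = c \<Longrightarrow> thesis" for K thesis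
    proof (rule gg_cases[where m=K and a'=a' and P="\<lambda>x. fst x = c" and u="(1,0)"])
      fix k assume "K = gg a' (\<lambda>x. fst x = c) (1, 0) k"
      then show thesis using A1 g_def by simp
    next
      fix k assume "K = gg a' (\<lambda>x. fst x = c) (1, 0) k + 1" "fst ((a' ^^ k) (1, 0)) = c"
      then show thesis using A2 g_def w'_def by simp
    qed
    have g0: "g 0 = 0" by (simp add: g_def)
    have gpos: "k \<ge> 1 \<Longrightarrow> g k \<ge> 1" for k unfolding g_def by (rule gg_pos)
    have gless: "g l < g k \<longleftrightarrow> l < k" for l k unfolding g_def by (rule gg_less_iff)
    show ?thesis unfolding L1 L2
    proof (rule set_eqI, rule iffI)
      fix v assume "v \<in> {fst (w k) |k. k \<ge> 1 \<and> (\<forall>l\<in>{1..<k}. fst (w k) < fst (w l)) \<and> snd (w k) = t}"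
      then obtain K where K: "v = fst (w K)" "K \<ge> 1" "\<forall>l\<in>{1..<K}. fst (w K) < fst (w l)" "snd (w K) = t" by blast
      show "v \<in> {fst (w' k) |k. k \<ge> 1 \<and> (\<forall>l\<in>{1..<k}. fst (w' k) < fst (w' l)) \<and> snd (w' k) = t} \<union> (if c = 1 \<and> (r - e) mod r = t then {n} else {})"
      proof (rule cases[of K])
        fix k assume Kk: "K = g k"
        then have k1: "k \<ge> 1" using K(2) g0 by (cases k) auto
        have "\<forall>l\<in>{1..<k}. fst (w' k) < fst (w' l)"
        proof
          fix l assume l: "l \<in> {1..<k}"
          then have "g l < g k" "g l \<ge> 1" using gless gpos by auto
          then have "g l \<in> {1..<K}" using Kk by simp
          then show "fst (w' k) < fst (w' l)" using K(3) Kk wg by simp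
        qed
        moreover have "v = fst (w' k)" "snd (w' k) = t" using K(1,4) Kk wg[of k] by simp_all
        ultimately show ?thesis using k1 by blast
      next
        fix k assume Kk: "K = g k + 1" and P: "fst (w' k) = c"
        have vn: "v = n" using K(1) Kk wg1 afst[OF P] by simp
        have k0: "k = 0"
        proof (rule ccontr)
          assume "k \<noteq> 0"
          then have "g k \<in> {1..<K}" using Kk gpos[of k] by auto
          then have "n < fst (w' k)" using K(1,3) vn wg by simp
          then show False using w'r[of k] by simp
        qed
        have c1: "c = 1" using P k0 by (simp add: w'_def)
        have "snd (w K) = (r - e) mod r" using Kk k0 g0 c1 by (simp add: w_def a_def cact_def zz_def)
        then show ?thesis using vn c1 K(4) by simp
      qed
    next
      fix v assume v: "v \<in> {fst (w' k) |k. k \<ge> 1 \<and> (\<forall>l\<in>{1..<k}. fst (w' k) < fst (w' l)) \<and> snd (w' k) = t} \<union> (if c = 1 \<and> (r - e) mod r = t then {n} else {})"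
      show "v \<in> {fst (w k) |k. k \<ge> 1 \<and> (\<forall>l\<in>{1..<k}. fst (w k) < fst (w l)) \<and> snd (w k) = t}"
      proof (cases "v \<in> {fst (w' k) |k. k \<ge> 1 \<and> (\<forall>l\<in>{1..<k}. fst (w' k) < fst (w' l)) \<and> snd (w' k) = t}")
        case True
        then obtain k where k: "v = fst (w' k)" "k \<ge> 1" "\<forall>l\<in>{1..<k}. fst (w' k) < fst (w' l)" "snd (w' k) = t" by blast
        have "\<forall>L\<in>{1..<g k}. fst (w (g k)) < fst (w L)"
        proof
          fix L assume L: "L \<in> {1..<g k}"
          show "fst (w (g k)) < fst (w L)"
          proof (rule cases[of L])
            fix l assume Ll: "L = g l"
            then have "l < k" using L gless by auto
            moreover have "l \<ge> 1" using L Ll g0 by (cases l) auto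
            ultimately show ?thesis using k(3) Ll wg by simp
          next
            fix l assume Ll: "L = g l + 1" and P: "fst (w' l) = c"
            have "fst (w L) = n" using Ll wg1 afst[OF P] by simp
            moreover have "fst (w' k) < n" using w'r[of k] n unfolding atLeastAtMost_iff by linarith
            ultimately show ?thesis using wg[of k] by simp
          qed
        qed
        moreover have "g k \<ge> 1" using k(2) gpos by auto
        moreover have "v = fst (w (g k))" "snd (w (g k)) = t" using k(1,4) wg[of k] by simp_all
        ultimately show ?thesis by blast
      next
        case False
        then have vc: "v = n" "c = 1" "(r - e) mod r = t" using v by (auto split: if_splits)
        have "w 1 = a (1, 0)" by (simp add: w_def)
        then have "fst (w 1) = n" "snd (w 1) = (r - e) mod r" using vc(1,2) sn by (simp_all add: a_def cact_def \<sigma>_def zz_def)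
        then show ?thesis using vc by fastforce
      qed
    qed
  qed
qed

lemma Lmic_base:
  assumes pi: "\<pi> \<in> Grn r 0" and e: "e < r" and r: "r \<ge> 1"
  shows "Lmic r (ins_s r 1 \<pi> 1 e) t = (if (r - e) mod r = t then {1} else {})"
proof -
  have G2: "ins_s r 1 \<pi> 1 e \<in> Grn r 1"
  proof -
    have "(\<pi>, 1, e) \<in> Dom r 1 (\<lambda>_. 1)" using pi e by (auto simp: Dom_def Grnf_def Grn_def)
    then have "ins_s r 1 \<pi> 1 e \<in> Grnf r 1 (\<lambda>_. 1)" by (intro ins_s_mem[OF r]) auto
    then show ?thesis by (rule Grnf_sub)
  qed
  define w where "w k = (cact r (ins_s r 1 \<pi> 1 e) ^^ k) (1, 0)" for k
  have wr: "fst (w k) = 1" for k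
    unfolding w_def cact_fst using permutes_in_funpow_image[OF Grn_perm[OF G2], of 1] by simp
  have w1: "snd (w 1) = (r - e) mod r" by (simp add: w_def cact_def ins_s_def)
  have "Lmic r (ins_s r 1 \<pi> 1 e) t = {fst (w k) |k. k \<ge> 1 \<and> (\<forall>l\<in>{1..<k}. fst (w k) < fst (w l)) \<and> snd (w k) = t}"
    unfolding w_def by (rule Lmic_alt[OF G2]) simp
  also have "\<dots> = (if (r - e) mod r = t then {1} else {})"
  proof -
    have "(k \<ge> 1 \<and> (\<forall>l\<in>{1..<k}. fst (w k) < fst (w l)) \<and> snd (w k) = t) \<longleftrightarrow> (k = 1 \<and> (r - e) mod r = t)" for k
    proof (cases "k \<ge> 2")
      case True
      then have "1 \<in> {1..<k}" by auto
      then show ?thesis using wr True by fastforce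
    next
      case False
      then show ?thesis using w1 by (cases "k = 1") auto
    qed
    then show ?thesis using wr by auto
  qed
  finally show ?thesis .
qed

definition negc :: "nat \<Rightarrow> nat \<times> nat \<times> nat \<Rightarrow> nat \<times> nat \<times> nat" where
  "negc r x = (fst x, fst (snd x), (r - snd (snd x)) mod r)"

definition INV :: "nat \<Rightarrow> nat \<Rightarrow> cperm \<Rightarrow> cperm \<Rightarrow> bool" where
  "INV r n \<pi>1 \<pi>2 \<longleftrightarrow> Lf n \<pi>1 = sor r n \<pi>2 \<and> (\<forall>t<r. Rmil n \<pi>1 t = Cyc r n \<pi>2 ((r - t) mod r))
     \<and> (n \<ge> 1 \<longrightarrow> (\<forall>t<r. Lmil n \<pi>1 t = Lmic r \<pi>2 ((r - t) mod r))) \<and> LRM n \<pi>1 = negc r ` LRM n \<pi>2"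

lemma neg_inj: "(e::nat) < r \<Longrightarrow> t < r \<Longrightarrow> ((r - e) mod r = (r - t) mod r) = (e = t)"
  by (metis mod_neg_neg)

lemma bij_del_l:
  assumes r: "r \<ge> 1" and n: "n \<ge> 1" and mono: "\<forall>i\<in>{1..n}. \<forall>j\<in>{1..n}. i \<le> j \<longrightarrow> f i \<le> f j"
  shows "bij_betw (del_l n) (Grnf r n f) (Dom r n f)"
proof (rule bij_betwI[where g = "\<lambda>(\<pi>, c, e). ins_l n \<pi> c e"])
  show "(\<lambda>(\<pi>, c, e). ins_l n \<pi> c e) \<in> Dom r n f \<rightarrow> Grnf r n f" using ins_l_mem[OF r n mono] by auto
  show "del_l n \<in> Grnf r n f \<rightarrow> Dom r n f" using del_l_mem[OF r n mono] by auto
  show "del_l n (case x of (\<pi>, c, e) \<Rightarrow> ins_l n \<pi> c e) = x" if "x \<in> Dom r n f" for x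
    using del_ins_l[OF r] that by (cases x) auto
  show "(case del_l n y of (\<pi>, c, e) \<Rightarrow> ins_l n \<pi> c e) = y" if "y \<in> Grnf r n f" for y
    using ins_del_l[OF that n] by simp
qed

lemma INV_0: "INV r 0 \<pi> \<pi>"
  by (simp add: INV_def Lf_def LS_def sor_def Rmil_def Cyc_def LRM_def)

lemma INV_step:
  assumes r: "r \<ge> 1" and n: "n = Suc m" and p1: "\<pi>1 \<in> Grn r m" and p2: "\<pi>2 \<in> Grn r m"
    and I: "INV r m \<pi>1 \<pi>2" and c: "c \<in> {1..n}" and e: "e < r"
  shows "INV r n (ins_l n \<pi>1 c e) (ins_s r n \<pi>2 c e)"
proof -
  have m: "m = n - 1" using n by simp
  have p1': "\<pi>1 \<in> Grn r (n-1)" and p2': "\<pi>2 \<in> Grn r (n-1)" using p1 p2 m by simp_all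
  have A: "Lf n (ins_l n \<pi>1 c e) = sor r n (ins_s r n \<pi>2 c e)"
    using Lf_ins_l[OF p1' c, of e] sor_ins_s[OF p2' c e r] I m by (simp add: INV_def)
  have B: "\<forall>t<r. Rmil n (ins_l n \<pi>1 c e) t = Cyc r n (ins_s r n \<pi>2 c e) ((r - t) mod r)"
  proof (intro allI impI)
    fix t assume t: "t < r"
    show "Rmil n (ins_l n \<pi>1 c e) t = Cyc r n (ins_s r n \<pi>2 c e) ((r - t) mod r)"
      using Rmil_ins_l[OF p1' c, of e t] Cyc_ins_s[OF p2' c e r, of "(r - t) mod r"] I t m neg_inj[OF e t]
      by (simp add: INV_def)
  qed
  have C: "\<forall>t<r. Lmil n (ins_l n \<pi>1 c e) t = Lmic r (ins_s r n \<pi>2 c e) ((r - t) mod r)"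
  proof (intro allI impI)
    fix t assume t: "t < r"
    show "Lmil n (ins_l n \<pi>1 c e) t = Lmic r (ins_s r n \<pi>2 c e) ((r - t) mod r)"
    proof (cases "m = 0")
      case True
      then have n1: "n = 1" "c = 1" using n c by auto
      have "Lmil n (ins_l n \<pi>1 c e) t = (if e = t then {1} else {})"
        using Lmil_ins_l[OF p1' c, of e t] n1 by (simp add: Lmil_def)
      moreover have "Lmic r (ins_s r n \<pi>2 c e) ((r - t) mod r) = (if (r - e) mod r = (r - t) mod r then {1} else {})"
        using Lmic_base[OF _ e r, of \<pi>2] p2 True n1 by simp
      ultimately show ?thesis using neg_inj[OF e t] by simp
    next
      case False
      then have n2: "n \<ge> 2" using n by simp
      show ?thesis
        using Lmil_ins_l[OF p1' c, of e t] Lmic_ins_s[OF p2' c e r n2, of "(r - t) mod r"] I t m False neg_inj[OF e t]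
        by (simp add: INV_def)
    qed
  qed
  have D: "LRM n (ins_l n \<pi>1 c e) = negc r ` LRM n (ins_s r n \<pi>2 c e)"
  proof -
    have "negc r ` LRM n (ins_s r n \<pi>2 c e) = negc r ` ({x \<in> LRM (n-1) \<pi>2. fst x < c} \<union> {(c, n, (r - e) mod r)})"
      using LRM_ins_s[OF p2' c] by simp
    also have "\<dots> = {x \<in> negc r ` LRM (n-1) \<pi>2. fst x < c} \<union> {(c, n, e)}"
      using mod_neg_neg[OF e] by (auto simp: negc_def image_iff)
    also have "negc r ` LRM (n-1) \<pi>2 = LRM (n-1) \<pi>1" using I m by (simp add: INV_def)
    finally show ?thesis using LRM_ins_l[OF p1' c] by simp
  qed
  show ?thesis using A B C D by (simp add: INV_def)
qed

lemma main:
  assumes r: "r \<ge> 1"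
  shows "(\<forall>i\<in>{1..n}. \<forall>j\<in>{1..n}. i \<le> j \<longrightarrow> f i \<le> f j) \<Longrightarrow>
    \<exists>h. bij_betw h (Grnf r n f) (Grnf r n f) \<and> (\<forall>\<pi>\<in>Grnf r n f. INV r n \<pi> (h \<pi>))"
proof (induction n)
  case 0
  show ?case
  proof (intro exI[of _ id] conjI)
    show "bij_betw id (Grnf r 0 f) (Grnf r 0 f)" by (rule bij_betw_id)
    show "\<forall>\<pi>\<in>Grnf r 0 f. INV r 0 \<pi> (id \<pi>)" by (simp add: INV_0)
  qed
next
  case (Suc m)
  define n where "n = Suc m"
  have mono: "\<forall>i\<in>{1..n}. \<forall>j\<in>{1..n}. i \<le> j \<longrightarrow> f i \<le> f j" using Suc.prems n_def by simp
  have monom: "\<forall>i\<in>{1..m}. \<forall>j\<in>{1..m}. i \<le> j \<longrightarrow> f i \<le> f j" using Suc.prems by simp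
  obtain h' where h': "bij_betw h' (Grnf r m f) (Grnf r m f)" "\<forall>\<pi>\<in>Grnf r m f. INV r m \<pi> (h' \<pi>)"
    using Suc.IH[OF monom] by blast
  have n1: "n \<ge> 1" using n_def by simp
  define h where "h = (\<lambda>(\<pi>, c, e). ins_s r n \<pi> c e) \<circ> (map_prod h' id \<circ> del_l n)"
  have DomE: "Dom r n f = Grnf r m f \<times> ({c\<in>{1..n}. n \<le> f c} \<times> {..<r})" by (simp add: Dom_def n_def)
  have bmap: "bij_betw (map_prod h' id) (Dom r n f) (Dom r n f)"
    unfolding DomE by (rule bij_betw_map_prod[OF h'(1) bij_betw_id])
  have bij: "bij_betw h (Grnf r n f) (Grnf r n f)"
    unfolding h_def by (rule bij_betw_trans[OF bij_betw_trans[OF bij_del_l[OF r n1 mono] bmap] bij_ins_s[OF r n1 mono]])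
  have inv: "INV r n \<pi> (h \<pi>)" if pi: "\<pi> \<in> Grnf r n f" for \<pi>
  proof -
    obtain \<pi>' c e where d: "del_l n \<pi> = (\<pi>', c, e)" by (metis prod.collapse)
    have dom: "(\<pi>', c, e) \<in> Dom r n f" using del_l_mem[OF r n1 mono pi] d by simp
    then have pi': "\<pi>' \<in> Grnf r m f" and c: "c \<in> {1..n}" and e: "e < r" by (auto simp: DomE)
    have eq: "\<pi> = ins_l n \<pi>' c e" using ins_del_l[OF pi n1] d by simp
    have hpi: "h \<pi> = ins_s r n (h' \<pi>') c e" by (simp add: h_def d)
    have hpi': "h' \<pi>' \<in> Grnf r m f" using h'(1) pi' by (auto simp: bij_betw_def)
    have "INV r n (ins_l n \<pi>' c e) (ins_s r n (h' \<pi>') c e)"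
      by (rule INV_step[OF r n_def Grnf_sub[OF pi'] Grnf_sub[OF hpi'] _ c e]) (use h'(2) pi' in blast)
    then show ?thesis by (simp only: hpi[symmetric] eq[symmetric])
  qed
  show ?case using bij inv n_def by blast
qed

lemma Lmal_LRM: "Lmal n \<pi> t = {v. \<exists>p. (p, v, t) \<in> LRM n \<pi>}"
  unfolding Lmal_def LRM_def by blast

lemma Lmap_LRM: "Lmap n \<pi> t = {p. \<exists>v. (p, v, t) \<in> LRM n \<pi>}"
  unfolding Lmap_def LRM_def by blast

lemma LRM_col: "\<pi> \<in> Grn r n \<Longrightarrow> r \<ge> 1 \<Longrightarrow> x \<in> LRM n \<pi> \<Longrightarrow> snd (snd x) < r"
  unfolding LRM_def using Grn_col by fastforce

lemma negc_mem:
  assumes "\<pi> \<in> Grn r n" "r \<ge> 1" "t < r"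
  shows "(p, v, t) \<in> negc r ` LRM n \<pi> \<longleftrightarrow> (p, v, (r - t) mod r) \<in> LRM n \<pi>"
proof
  assume "(p, v, t) \<in> negc r ` LRM n \<pi>"
  then obtain x where x: "x \<in> LRM n \<pi>" "(p, v, t) = negc r x" by blast
  have "snd (snd x) < r" using LRM_col[OF assms(1,2) x(1)] .
  then have "snd (snd x) = (r - t) mod r" using x(2) mod_neg_neg by (simp add: negc_def)
  then show "(p, v, (r - t) mod r) \<in> LRM n \<pi>" using x by (cases x) (simp add: negc_def)
next
  assume "(p, v, (r - t) mod r) \<in> LRM n \<pi>"
  moreover have "negc r (p, v, (r - t) mod r) = (p, v, t)" using mod_neg_neg[OF assms(3)] by (simp add: negc_def)
  ultimately show "(p, v, t) \<in> negc r ` LRM n \<pi>" by (metis image_eqI)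
qed

lemma tuple_eq:
  assumes pi: "\<pi> \<in> Grnf r n f" and rho: "\<rho> \<in> Grnf r n f" and I: "INV r n \<pi> \<rho>" and r: "r \<ge> 1" and n: "n \<ge> 1"
  shows "tuple1 r n \<pi> = tuple2 r n \<rho>"
proof -
  have G: "\<pi> \<in> Grn r n" "\<rho> \<in> Grn r n" using pi rho Grnf_sub by auto
  have cd: "colors_down r = map (\<lambda>t. (r - t) mod r) (colors_up r)" by (simp add: colors_down_def colors_up_def)
  have 1: "clength r n \<pi> = sor r n \<rho>" using clength_Lf[OF G(1) r n] I by (simp add: INV_def)
  have 2: "map (Rmil n \<pi>) (colors_up r) = map (Cyc r n \<rho>) (colors_down r)"
    unfolding cd map_map using I by (auto simp: INV_def colors_up_def)
  have 3: "map (Lmil n \<pi>) (colors_up r) = map (Lmic r \<rho>) (colors_down r)"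
    unfolding cd map_map using I n by (auto simp: INV_def colors_up_def)
  have L: "LRM n \<pi> = negc r ` LRM n \<rho>" using I by (simp add: INV_def)
  have 4: "map (Lmal n \<pi>) (colors_up r) = map (Lmal n \<rho>) (colors_down r)"
    unfolding cd map_map Lmal_LRM L using negc_mem[OF G(2) r] by (auto simp: colors_up_def)
  have 5: "map (Lmap n \<pi>) (colors_up r) = map (Lmap n \<rho>) (colors_down r)"
    unfolding cd map_map Lmap_LRM L using negc_mem[OF G(2) r] by (auto simp: colors_up_def)
  show ?thesis unfolding tuple1_def tuple2_def using 1 2 3 4 5 by simp
qed

theorem theoremA:
  fixes r n :: nat and f :: "nat \<Rightarrow> nat"
  assumes "r \<ge> 1" and "n \<ge> 1"
    and "\<forall>i\<in>{1..n}. 1 \<le> f i \<and> f i \<le> n"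
    and "\<forall>i\<in>{1..n}. \<forall>j\<in>{1..n}. i \<le> j \<longrightarrow> f i \<le> f j"
  shows "\<forall>v. card {\<pi> \<in> Grnf r n f. tuple1 r n \<pi> = v} = card {\<pi> \<in> Grnf r n f. tuple2 r n \<pi> = v}"
proof
  fix v
  obtain h where h: "bij_betw h (Grnf r n f) (Grnf r n f)" "\<forall>\<pi>\<in>Grnf r n f. INV r n \<pi> (h \<pi>)"
    using main[OF assms(1) assms(4)] by blast
  have hmem: "\<pi> \<in> Grnf r n f \<Longrightarrow> h \<pi> \<in> Grnf r n f" for \<pi> using h(1) by (auto simp: bij_betw_def)
  have T: "\<pi> \<in> Grnf r n f \<Longrightarrow> tuple2 r n (h \<pi>) = tuple1 r n \<pi>" for \<pi>
    using tuple_eq[OF _ hmem h(2)[rule_format] assms(1,2)] by metis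
  have img: "h ` {\<pi> \<in> Grnf r n f. tuple1 r n \<pi> = v} = {\<pi> \<in> Grnf r n f. tuple2 r n \<pi> = v}"
  proof
    show "h ` {\<pi> \<in> Grnf r n f. tuple1 r n \<pi> = v} \<subseteq> {\<pi> \<in> Grnf r n f. tuple2 r n \<pi> = v}"
      using T hmem by auto
    show "{\<pi> \<in> Grnf r n f. tuple2 r n \<pi> = v} \<subseteq> h ` {\<pi> \<in> Grnf r n f. tuple1 r n \<pi> = v}"
    proof
      fix \<rho> assume \<rho>: "\<rho> \<in> {\<pi> \<in> Grnf r n f. tuple2 r n \<pi> = v}"
      have "\<rho> \<in> h ` Grnf r n f" using h(1) \<rho> by (simp add: bij_betw_def)
      then obtain \<pi> where \<pi>: "\<pi> \<in> Grnf r n f" "\<rho> = h \<pi>" by blast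
      then have "tuple1 r n \<pi> = v" using T \<rho> by auto
      then show "\<rho> \<in> h ` {\<pi> \<in> Grnf r n f. tuple1 r n \<pi> = v}" using \<pi> by blast
    qed
  qed
  have inj: "inj_on h {\<pi> \<in> Grnf r n f. tuple1 r n \<pi> = v}"
    using h(1) by (auto simp: bij_betw_def intro: inj_on_subset)
  show "card {\<pi> \<in> Grnf r n f. tuple1 r n \<pi> = v} = card {\<pi> \<in> Grnf r n f. tuple2 r n \<pi> = v}"
    using card_image[OF inj] img by simp
qed

end
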